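(* Let $E,H$ be finite directed graphs, $\xi^0,\xi^1:H\to E$ an embedding pair and $(G_\xi,E)$ its associated self-similar groupoid action. Let $E^0_{OS}$ be the set obtained from $E^1$ by identifying $\xi^0(h)$ with $\xi^1(h)$ for every $h\in H^1$, $\pi:E^1\to E^0_{OS}$ the quotient map and $\beta:E^0_{OS}\to E^0$ the unique map with $\beta\circ\pi=s$. Then the out-split $(G_{OS},E_{OS})$ of $(G_\xi,E)$ by $OS=(\pi,\beta)$ is canonically isomorphic to the KEP-action $(G_B,E_A)$, where $A=(A_{v,w})_{v,w\in E^0_{OS}}$ is the adjacency matrix of $E_{OS}$ (i.e. $A_{v,w}$ is the number of edges of $E_{OS}$ with range $v$ and source $w$) and $B=(\max\{0,A_{v,w}-1\})_{v,w\in E^0_{OS}}$. Moreover, $(\tilde\sigma,\mathcal{J}_{G_\xi,E})$ and $(\tilde\sigma,\mathcal{J}_{G_B,E_A})$ are topologically conjugate.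
   Context: Graphs, paths and $E^{-\infty}$: $E=(E^0,E^1,r,s)$; finite paths $\mu_1\cdots\mu_n$ with $s(\mu_i)=r(\mu_{i+1})$; $E^{-\infty}$ left-infinite paths $\cdots\mu_{-2}\mu_{-1}$ (product topology), shift $\sigma$ deleting $\mu_{-1}$. Embedding pair: injective graph homomorphisms $\xi^0,\xi^1:H\to E$ with $\xi^0|_{H^0}=\xi^1|_{H^0}$ and $\xi^0(H^1)\cap\xi^1(H^1)=\emptyset$; $H^1_\xi=\xi^0(H^1)\cup\xi^1(H^1)$. $(G_\xi,E)$: on the group bundle $\mathbb{Z}\times E^0$ (product $(m,v)(n,v)=(m+n,v)$) define for $e\in vE^1$: if $e\notin H^1_\xi$, $(m,v)\cdot e=e$, $(m,v)|_e=(0,s(e))$; if $e=\xi^i(h)$, writing $m+i=2n+j$ with $j\in\{0,1\}$, $n\in\mathbb{Z}$: $(m,v)\cdot e=\xi^j(h)$, $(m,v)|_e=(n,s(e))$; extend to paths by $g\cdot(e\nu)=(g\cdot e)(g|_e\cdot\nu)$. $G_\xi$ is the quotient by elements acting trivially on $E^*$; it is a self-similar group bundle. Out-split of a self-similar group bundle $(G,E)$ by $(\pi,\beta)$ with $s=\beta\circ\pi$: $E_{OS}$ has vertices $E^0_{OS}$, edges $\{(v,e):\beta(v)=r(e)\}$, $r_{OS}(v,e)=v$, $s_{OS}(v,e)=\pi(e)$; $G_{OS}=\{(g,v): d(g)=c(g)=\beta(v)\}$ with $(g,v)\cdot(v,e)=(v,g\cdot e)$ and $(g,v)|_{(v,e)}=(g|_e,\pi(e))$.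 KEP-action: for a Katsura pair $(A,B)$ ($A$ a nonnegative integer matrix, $B$ an integer matrix, $A_{ij}=0\Rightarrow B_{ij}=0$, indexed by a finite set), $E_A$ has vertices the index set and edges $e_{i,j,m}$, $0\le m<A_{ij}$, with $r=i$, $s=j$; the group bundle $\mathbb{Z}\times E_A^0$ with elements $a_i^k$ acts by $a_i^k\cdot e_{i,j,m}=e_{i,j,\hat m}$, $a_i^k|_{e_{i,j,m}}=a_j^{\hat k}$ where $kB_{ij}+m=\hat kA_{ij}+\hat m$, $0\le\hat m<A_{ij}$, extended recursively to paths; $G_B$ is its faithful quotient and $(G_B,E_A)$ the KEP-action. Limit space: for a self-similar groupoid $(G,E)$, $\mu\sim_{ae}\nu$ iff there are a finite $F\subseteq G$ and $(g_n)_{n<0}\subseteq F$ with $d(g_n)=r(\mu_n)$ and $g_n\cdot\mu_n\cdots\mu_{-1}=\nu_n\cdots\nu_{-1}$ for all $n<0$; $\mathcal{J}_{G,E}=E^{-\infty}/\sim_{ae}$ with $\tilde\sigma$ induced by $\sigma$. *)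

theory Defs
  imports "HOL-Analysis.Analysis"
begin

record ('v,'e) dgraph =
  verts :: "'v set"
  edges :: "'e set"
  rng :: "'e \<Rightarrow> 'v"
  src :: "'e \<Rightarrow> 'v"

definition finite_graph :: "('v,'e) dgraph \<Rightarrow> bool" where
  "finite_graph E \<longleftrightarrow> finite (verts E) \<and> finite (edges E)
     \<and> (\<forall>e\<in>edges E. rng E e \<in> verts E \<and> src E e \<in> verts E)"

definition is_path :: "('v,'e) dgraph \<Rightarrow> 'e list \<Rightarrow> bool" where
  "is_path E \<mu> \<longleftrightarrow> set \<mu> \<subseteq> edges E
     \<and> (\<forall>i. Suc i < length \<mu> \<longrightarrow> src E (\<mu> ! i) = rng E (\<mu> ! Suc i))"

record ('v,'e,'g) ssg = "('v,'e) dgraph" +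
  grp :: "'g set"
  dom :: "'g \<Rightarrow> 'v"
  cod :: "'g \<Rightarrow> 'v"
  mul :: "'g \<Rightarrow> 'g \<Rightarrow> 'g"
  act :: "'g \<Rightarrow> 'e \<Rightarrow> 'e"
  res :: "'g \<Rightarrow> 'e \<Rightarrow> 'g"

definition ssg_iso :: "('v,'e,'g,'a) ssg_scheme \<Rightarrow> ('w,'f,'k,'b) ssg_scheme \<Rightarrow>
    ('v \<Rightarrow> 'w) \<Rightarrow> ('e \<Rightarrow> 'f) \<Rightarrow> ('g \<Rightarrow> 'k) \<Rightarrow> bool" where
  "ssg_iso S T \<phi>0 \<phi>1 \<psi> \<longleftrightarrow>
     bij_betw \<phi>0 (verts S) (verts T) \<and> bij_betw \<phi>1 (edges S) (edges T)
     \<and> bij_betw \<psi> (grp S) (grp T)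
     \<and> (\<forall>e\<in>edges S. rng T (\<phi>1 e) = \<phi>0 (rng S e) \<and> src T (\<phi>1 e) = \<phi>0 (src S e))
     \<and> (\<forall>g\<in>grp S. dom T (\<psi> g) = \<phi>0 (dom S g) \<and> cod T (\<psi> g) = \<phi>0 (cod S g))
     \<and> (\<forall>g\<in>grp S. \<forall>h\<in>grp S. dom S g = cod S h \<longrightarrow> \<psi> (mul S g h) = mul T (\<psi> g) (\<psi> h))
     \<and> (\<forall>g\<in>grp S. \<forall>e\<in>edges S. dom S g = rng S e \<longrightarrow>
           act T (\<psi> g) (\<phi>1 e) = \<phi>1 (act S g e) \<and> \<psi> (res S g e) = res T (\<psi> g) (\<phi>1 e))"

definition ssg_isomorphic :: "('v,'e,'g,'a) ssg_scheme \<Rightarrow> ('w,'f,'k,'b) ssg_scheme \<Rightarrow> bool" where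
  "ssg_isomorphic S T \<longleftrightarrow> (\<exists>\<phi>0 \<phi>1 \<psi>. ssg_iso S T \<phi>0 \<phi>1 \<psi>)"

fun act_path :: "('v,'e,'g,'a) ssg_scheme \<Rightarrow> 'g \<Rightarrow> 'e list \<Rightarrow> 'e list" where
  "act_path S g [] = []"
| "act_path S g (e # \<nu>) = act S g e # act_path S (res S g e) \<nu>"

section \<open>Faithful quotient of the group bundle \<open>\<int> \<times> E\<^sup>0\<close> acting by a cocycle\<close>

text \<open>\<open>za m e\<close> is \<open>(m, r(e))\<cdot>e\<close> and \<open>zr m e\<close> is the integer \<open>n\<close> with \<open>(m,r(e))|\<^sub>e = (n, s(e))\<close>.\<close>
fun zpath :: "(int \<Rightarrow> 'e \<Rightarrow> 'e) \<Rightarrow> (int \<Rightarrow> 'e \<Rightarrow> int) \<Rightarrow> int \<Rightarrow> 'e list \<Rightarrow> 'e list" where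
  "zpath za zr m [] = []"
| "zpath za zr m (e # \<nu>) = za m e # zpath za zr (zr m e) \<nu>"

text \<open>The class of \<open>(m,v)\<close> modulo elements acting trivially on \<open>E\<^sup>*\<close>:
  \<open>(m,v)\<close> and \<open>(n,v)\<close> are identified iff they act identically on \<open>vE\<^sup>*\<close>.\<close>
definition zcls :: "('v,'e) dgraph \<Rightarrow> (int \<Rightarrow> 'e \<Rightarrow> 'e) \<Rightarrow> (int \<Rightarrow> 'e \<Rightarrow> int) \<Rightarrow> int \<Rightarrow> 'v
     \<Rightarrow> int set \<times> 'v" where
  "zcls E za zr m v = ({n. \<forall>\<mu>. is_path E \<mu> \<and> \<mu> \<noteq> [] \<and> rng E (hd \<mu>) = v
        \<longrightarrow> zpath za zr m \<mu> = zpath za zr n \<mu>}, v)"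

definition zrep :: "int set \<times> 'v \<Rightarrow> int" where
  "zrep g = (SOME m. m \<in> fst g)"

definition zquot :: "('v,'e) dgraph \<Rightarrow> (int \<Rightarrow> 'e \<Rightarrow> 'e) \<Rightarrow> (int \<Rightarrow> 'e \<Rightarrow> int)
     \<Rightarrow> ('v,'e,int set \<times> 'v) ssg" where
  "zquot E za zr =
     \<lparr> verts = verts E, edges = edges E, rng = rng E, src = src E,
       grp = {zcls E za zr m v | m v. v \<in> verts E},
       dom = snd, cod = snd,
       mul = (\<lambda>g h. zcls E za zr (zrep g + zrep h) (snd g)),
       act = (\<lambda>g e. za (zrep g) e),
       res = (\<lambda>g e. zcls E za zr (zr (zrep g) e) (src E e)) \<rparr>"

text \<open>\<open>\<xi>v\<close> is the common vertex map \<open>\<xi>\<^sup>0|\<^sub>H\<^sub>0 = \<xi>\<^sup>1|\<^sub>H\<^sub>0\<close>, \<open>\<xi>0, \<xi>1\<close> the edge maps.\<close>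
definition embedding_pair :: "('hv,'he) dgraph \<Rightarrow> ('v,'e) dgraph \<Rightarrow> ('hv \<Rightarrow> 'v)
     \<Rightarrow> ('he \<Rightarrow> 'e) \<Rightarrow> ('he \<Rightarrow> 'e) \<Rightarrow> bool" where
  "embedding_pair H E \<xi>v \<xi>0 \<xi>1 \<longleftrightarrow>
     \<xi>v ` verts H \<subseteq> verts E \<and> inj_on \<xi>v (verts H)
     \<and> \<xi>0 ` edges H \<subseteq> edges E \<and> inj_on \<xi>0 (edges H)
     \<and> \<xi>1 ` edges H \<subseteq> edges E \<and> inj_on \<xi>1 (edges H)
     \<and> (\<forall>h\<in>edges H. rng E (\<xi>0 h) = \<xi>v (rng H h) \<and> src E (\<xi>0 h) = \<xi>v (src H h)
                    \<and> rng E (\<xi>1 h) = \<xi>v (rng H h) \<and> src E (\<xi>1 h) = \<xi>v (src H h))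
     \<and> \<xi>0 ` edges H \<inter> \<xi>1 ` edges H = {}"

definition xi_act :: "('hv,'he) dgraph \<Rightarrow> ('he \<Rightarrow> 'e) \<Rightarrow> ('he \<Rightarrow> 'e) \<Rightarrow> int \<Rightarrow> 'e \<Rightarrow> 'e" where
  "xi_act H \<xi>0 \<xi>1 m e =
     (if \<exists>h\<in>edges H. e = \<xi>0 h \<or> e = \<xi>1 h then
        (let h = (THE h. h \<in> edges H \<and> (e = \<xi>0 h \<or> e = \<xi>1 h));
             i = (if e = \<xi>0 h then 0 else 1 :: int)
         in if (m + i) mod 2 = 0 then \<xi>0 h else \<xi>1 h)
      else e)"

definition xi_res :: "('hv,'he) dgraph \<Rightarrow> ('he \<Rightarrow> 'e) \<Rightarrow> ('he \<Rightarrow> 'e) \<Rightarrow> int \<Rightarrow> 'e \<Rightarrow> int" where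
  "xi_res H \<xi>0 \<xi>1 m e =
     (if \<exists>h\<in>edges H. e = \<xi>0 h \<or> e = \<xi>1 h then
        (let h = (THE h. h \<in> edges H \<and> (e = \<xi>0 h \<or> e = \<xi>1 h));
             i = (if e = \<xi>0 h then 0 else 1 :: int)
         in (m + i) div 2)
      else 0)"

definition G_xi :: "('hv,'he) dgraph \<Rightarrow> ('v,'e) dgraph \<Rightarrow> ('he \<Rightarrow> 'e) \<Rightarrow> ('he \<Rightarrow> 'e)
     \<Rightarrow> ('v,'e,int set \<times> 'v) ssg" where
  "G_xi H E \<xi>0 \<xi>1 = zquot E (xi_act H \<xi>0 \<xi>1) (xi_res H \<xi>0 \<xi>1)"

definition out_split :: "('v,'e,'g,'a) ssg_scheme \<Rightarrow> 'w set \<Rightarrow> ('e \<Rightarrow> 'w) \<Rightarrow> ('w \<Rightarrow> 'v)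
     \<Rightarrow> ('w, 'w \<times> 'e, 'g \<times> 'w) ssg" where
  "out_split S V\<^sub>O\<^sub>S \<pi> \<beta> =
     \<lparr> verts = V\<^sub>O\<^sub>S, edges = {(v,e). v \<in> V\<^sub>O\<^sub>S \<and> e \<in> edges S \<and> \<beta> v = rng S e},
       rng = fst, src = (\<lambda>(v,e). \<pi> e),
       grp = {(g,v). g \<in> grp S \<and> v \<in> V\<^sub>O\<^sub>S \<and> dom S g = \<beta> v \<and> cod S g = \<beta> v},
       dom = snd, cod = snd,
       mul = (\<lambda>(g,v) (h,w). (mul S g h, v)),
       act = (\<lambda>(g,v) (w,e). (w, act S g e)),
       res = (\<lambda>(g,v) (w,e). (res S g e, \<pi> e)) \<rparr>"

definition xi_rel :: "('hv,'he) dgraph \<Rightarrow> ('v,'e) dgraph \<Rightarrow> ('he \<Rightarrow> 'e) \<Rightarrow> ('he \<Rightarrow> 'e) \<Rightarrow> 'e rel" where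
  "xi_rel H E \<xi>0 \<xi>1 = ({(\<xi>0 h, \<xi>1 h) | h. h \<in> edges H} \<union> {(\<xi>1 h, \<xi>0 h) | h. h \<in> edges H}
                        \<union> Id_on (edges E))\<^sup>*"

definition os_pi :: "('hv,'he) dgraph \<Rightarrow> ('v,'e) dgraph \<Rightarrow> ('he \<Rightarrow> 'e) \<Rightarrow> ('he \<Rightarrow> 'e) \<Rightarrow> 'e \<Rightarrow> 'e set" where
  "os_pi H E \<xi>0 \<xi>1 e = xi_rel H E \<xi>0 \<xi>1 `` {e}"

definition os_verts :: "('hv,'he) dgraph \<Rightarrow> ('v,'e) dgraph \<Rightarrow> ('he \<Rightarrow> 'e) \<Rightarrow> ('he \<Rightarrow> 'e) \<Rightarrow> 'e set set" where
  "os_verts H E \<xi>0 \<xi>1 = edges E // xi_rel H E \<xi>0 \<xi>1"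

definition os_beta :: "('v,'e) dgraph \<Rightarrow> 'e set \<Rightarrow> 'v" where
  "os_beta E c = src E (SOME e. e \<in> c)"

definition kat_graph :: "'i set \<Rightarrow> ('i \<Rightarrow> 'i \<Rightarrow> nat) \<Rightarrow> ('i, 'i \<times> 'i \<times> nat) dgraph" where
  "kat_graph I A = \<lparr> verts = I, edges = {(i,j,m). i \<in> I \<and> j \<in> I \<and> m < A i j},
      rng = (\<lambda>(i,j,m). i), src = (\<lambda>(i,j,m). j) \<rparr>"

text \<open>\<open>k B\<^sub>i\<^sub>j + m = k' A\<^sub>i\<^sub>j + m'\<close>, \<open>0 \<le> m' < A\<^sub>i\<^sub>j\<close>.\<close>
definition kat_act :: "('i \<Rightarrow> 'i \<Rightarrow> nat) \<Rightarrow> ('i \<Rightarrow> 'i \<Rightarrow> int) \<Rightarrow> int \<Rightarrow> 'i \<times> 'i \<times> nat \<Rightarrow> 'i \<times> 'i \<times> nat" where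
  "kat_act A B k = (\<lambda>(i,j,m). (i, j, nat ((k * B i j + int m) mod int (A i j))))"

definition kat_res :: "('i \<Rightarrow> 'i \<Rightarrow> nat) \<Rightarrow> ('i \<Rightarrow> 'i \<Rightarrow> int) \<Rightarrow> int \<Rightarrow> 'i \<times> 'i \<times> nat \<Rightarrow> int" where
  "kat_res A B k = (\<lambda>(i,j,m). (k * B i j + int m) div int (A i j))"

definition katsura_pair :: "'i set \<Rightarrow> ('i \<Rightarrow> 'i \<Rightarrow> nat) \<Rightarrow> ('i \<Rightarrow> 'i \<Rightarrow> int) \<Rightarrow> bool" where
  "katsura_pair I A B \<longleftrightarrow> finite I \<and> (\<forall>i\<in>I. \<forall>j\<in>I. A i j = 0 \<longrightarrow> B i j = 0)"

definition KEP :: "'i set \<Rightarrow> ('i \<Rightarrow> 'i \<Rightarrow> nat) \<Rightarrow> ('i \<Rightarrow> 'i \<Rightarrow> int)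
     \<Rightarrow> ('i, 'i \<times> 'i \<times> nat, int set \<times> 'i) ssg" where
  "KEP I A B = zquot (kat_graph I A) (kat_act A B) (kat_res A B)"

text \<open>A left-infinite path \<open>\<cdots>\<mu>\<^sub>-\<^sub>2\<mu>\<^sub>-\<^sub>1\<close> is encoded as \<open>x :: nat \<Rightarrow> 'e\<close> with
  \<open>x n = \<mu>\<^sub>-\<^sub>(\<^sub>n\<^sub>+\<^sub>1\<^sub>)\<close>; the shift deletes \<open>\<mu>\<^sub>-\<^sub>1\<close>.\<close>
definition left_inf :: "('v,'e,'a) dgraph_scheme \<Rightarrow> (nat \<Rightarrow> 'e) set" where
  "left_inf E = {x. (\<forall>n. x n \<in> edges E) \<and> (\<forall>n. src E (x (Suc n)) = rng E (x n))}"

definition left_inf_top :: "('v,'e,'a) dgraph_scheme \<Rightarrow> (nat \<Rightarrow> 'e) topology" where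
  "left_inf_top E = subtopology (product_topology (\<lambda>_. discrete_topology (edges E)) UNIV) (left_inf E)"

definition lshift :: "(nat \<Rightarrow> 'e) \<Rightarrow> (nat \<Rightarrow> 'e)" where
  "lshift x = (\<lambda>n. x (Suc n))"

text \<open>\<open>tail n x = \<mu>\<^sub>-\<^sub>(\<^sub>n\<^sub>+\<^sub>1\<^sub>) \<cdots> \<mu>\<^sub>-\<^sub>1\<close>.\<close>
definition tail :: "nat \<Rightarrow> (nat \<Rightarrow> 'e) \<Rightarrow> 'e list" where
  "tail n x = rev (map x [0..<Suc n])"

definition ae_equiv :: "('v,'e,'g,'a) ssg_scheme \<Rightarrow> (nat \<Rightarrow> 'e) rel" where
  "ae_equiv S = {(x,y). x \<in> left_inf S \<and> y \<in> left_inf S \<and>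
      (\<exists>F gs. finite F \<and> F \<subseteq> grp S \<and>
         (\<forall>n. gs n \<in> F \<and> dom S (gs n) = rng S (x n) \<and> act_path S (gs n) (tail n x) = tail n y))}"

definition quotient_top :: "'a topology \<Rightarrow> 'a rel \<Rightarrow> 'a set topology" where
  "quotient_top X R = topology (\<lambda>U. U \<subseteq> topspace X // R \<and> openin X (\<Union>U))"

definition limit_space :: "('v,'e,'g,'a) ssg_scheme \<Rightarrow> (nat \<Rightarrow> 'e) set topology" where
  "limit_space S = quotient_top (left_inf_top S) (ae_equiv S)"

definition limit_shift :: "('v,'e,'g,'a) ssg_scheme \<Rightarrow> (nat \<Rightarrow> 'e) set \<Rightarrow> (nat \<Rightarrow> 'e) set" where
  "limit_shift S c = ae_equiv S `` {lshift (SOME x. x \<in> c)}"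

definition top_conjugate :: "'a topology \<Rightarrow> ('a \<Rightarrow> 'a) \<Rightarrow> 'b topology \<Rightarrow> ('b \<Rightarrow> 'b) \<Rightarrow> bool" where
  "top_conjugate X f Y g \<longleftrightarrow>
     (\<exists>h. homeomorphic_map X Y h \<and> (\<forall>x\<in>topspace X. h (f x) = g (h x)))"

end

theory Submission
  imports Defs
begin


lemma zcls_refl: "m \<in> fst (zcls G za zr m v)"
  by (simp add: zcls_def)

lemma zrep_in: "zrep (zcls G za zr m v) \<in> fst (zcls G za zr m v)"
  unfolding zrep_def by (rule someI[of _ m]) (simp add: zcls_def)

lemma zcls_eq_iff:
  "zcls G za zr m v = zcls G za zr n v \<longleftrightarrow>
    (\<forall>\<mu>. is_path G \<mu> \<and> \<mu> \<noteq> [] \<and> rng G (hd \<mu>) = v \<longrightarrow> zpath za zr m \<mu> = zpath za zr n \<mu>)"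
  unfolding zcls_def by auto

lemma zrep_zcls: "zcls G za zr (zrep (zcls G za zr m v)) v = zcls G za zr m v"
  using zrep_in[of G za zr m v] unfolding zcls_eq_iff by (auto simp: zcls_def)

lemma zrep_path:
  assumes "is_path G \<mu>" "\<mu> \<noteq> []" "rng G (hd \<mu>) = v"
  shows "zpath za zr (zrep (zcls G za zr m v)) \<mu> = zpath za zr m \<mu>"
  using zrep_zcls[of G za zr m v] assms unfolding zcls_eq_iff by metis

lemma is_path_Cons: "is_path G (e # \<mu>) \<longleftrightarrow> e \<in> edges G \<and> is_path G \<mu> \<and> (\<mu> \<noteq> [] \<longrightarrow> src G e = rng G (hd \<mu>))"
  unfolding is_path_def
  apply (cases \<mu>)
   apply simp
  apply (auto simp: nth_Cons split: nat.splits)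
  done

lemma is_path_Nil[simp]: "is_path G []"
  by (simp add: is_path_def)

lemma zquot_simps:
  "verts (zquot G za zr) = verts G" "edges (zquot G za zr) = edges G"
  "rng (zquot G za zr) = rng G" "src (zquot G za zr) = src G"
  "grp (zquot G za zr) = {zcls G za zr m v | m v. v \<in> verts G}"
  "dom (zquot G za zr) = snd" "cod (zquot G za zr) = snd"
  "mul (zquot G za zr) = (\<lambda>g h. zcls G za zr (zrep g + zrep h) (snd g))"
  "act (zquot G za zr) = (\<lambda>g e. za (zrep g) e)"
  "res (zquot G za zr) = (\<lambda>g e. zcls G za zr (zr (zrep g) e) (src G e))"
  by (simp_all add: zquot_def)

lemma snd_zcls[simp]: "snd (zcls G za zr m v) = v"
  by (simp add: zcls_def)

lemma zact_single:
  assumes "e \<in> edges G" "rng G e = v"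
  shows "za (zrep (zcls G za zr m v)) e = za m e"
  using zrep_path[of G "[e]" v za zr m] assms by (simp add: is_path_def)

lemma zres_cls:
  assumes "e \<in> edges G" "rng G e = v" "zcls G za zr m v = zcls G za zr n v"
  shows "zcls G za zr (zr m e) (src G e) = zcls G za zr (zr n e) (src G e)"
  unfolding zcls_eq_iff
proof (intro allI impI)
  fix \<mu> assume h: "is_path G \<mu> \<and> \<mu> \<noteq> [] \<and> rng G (hd \<mu>) = src G e"
  then have "is_path G (e # \<mu>)" using assms by (simp add: is_path_Cons)
  then have "zpath za zr m (e # \<mu>) = zpath za zr n (e # \<mu>)"
    using assms(2,3) unfolding zcls_eq_iff by auto
  then show "zpath za zr (zr m e) \<mu> = zpath za zr (zr n e) \<mu>" by simp
qed

lemma act_path_zquot: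
  assumes "is_path G \<mu>" "\<mu> \<noteq> [] \<longrightarrow> rng G (hd \<mu>) = v"
  shows "act_path (zquot G za zr) (zcls G za zr m v) \<mu> = zpath za zr m \<mu>"
  using assms
proof (induction \<mu> arbitrary: m v)
  case Nil
  then show ?case by simp
next
  case (Cons e \<nu>)
  have e: "e \<in> edges G" "rng G e = v" using Cons.prems by (auto simp: is_path_Cons)
  let ?k = "zrep (zcls G za zr m v)"
  have eqc: "zcls G za zr ?k v = zcls G za zr m v" by (rule zrep_zcls)
  have r: "zcls G za zr (zr ?k e) (src G e) = zcls G za zr (zr m e) (src G e)"
    by (rule zres_cls[OF e eqc])
  have IH: "act_path (zquot G za zr) (zcls G za zr (zr ?k e) (src G e)) \<nu> = zpath za zr (zr ?k e) \<nu>"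
    using Cons.prems by (intro Cons.IH) (auto simp: is_path_Cons)
  have "zpath za zr (zr ?k e) \<nu> = zpath za zr (zr m e) \<nu>"
  proof (cases "\<nu> = []")
    case True then show ?thesis by simp
  next
    case False
    then show ?thesis using r Cons.prems unfolding zcls_eq_iff by (auto simp: is_path_Cons)
  qed
  then show ?case using IH zact_single[OF e] by (simp add: zquot_simps)
qed

lemma grp_zquot_elim:
  assumes "g \<in> grp (zquot G za zr)"
  shows "g = zcls G za zr (zrep g) (snd g)" "snd g \<in> verts G"
  using assms by (auto simp: zquot_simps zrep_zcls)

lemma act_path_zquot':
  assumes "g \<in> grp (zquot G za zr)" "is_path G \<mu>" "\<mu> \<noteq> [] \<longrightarrow> rng G (hd \<mu>) = snd g"
  shows "act_path (zquot G za zr) g \<mu> = zpath za zr (zrep g) \<mu>"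
  using act_path_zquot[OF assms(2,3), of za zr "zrep g"] grp_zquot_elim(1)[OF assms(1)] by simp


lemma quotient_top_open:
  assumes "equiv (topspace X) R"
  shows "openin (quotient_top X R) U \<longleftrightarrow> U \<subseteq> topspace X // R \<and> openin X (\<Union>U)"
proof -
  have "istopology (\<lambda>U. U \<subseteq> topspace X // R \<and> openin X (\<Union>U))"
    unfolding istopology_def
  proof (rule conjI; intro allI impI)
    fix S T assume S: "S \<subseteq> topspace X // R \<and> openin X (\<Union>S)" and T: "T \<subseteq> topspace X // R \<and> openin X (\<Union>T)"
    have "\<Union>(S \<inter> T) = \<Union>S \<inter> \<Union>T"
    proof
      show "\<Union>S \<inter> \<Union>T \<subseteq> \<Union>(S \<inter> T)"
      proof
        fix x assume "x \<in> \<Union>S \<inter> \<Union>T"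
        then obtain a b where ab: "a \<in> S" "b \<in> T" "x \<in> a" "x \<in> b" by auto
        then have "a = b" using quotient_disj[OF assms, of a b] S T by auto
        then show "x \<in> \<Union>(S \<inter> T)" using ab by auto
      qed
    qed auto
    then show "S \<inter> T \<subseteq> topspace X // R \<and> openin X (\<Union>(S \<inter> T))" using S T by auto
  next
    fix K assume K: "\<forall>S\<in>K. S \<subseteq> topspace X // R \<and> openin X (\<Union>S)"
    have "\<Union>(\<Union>K) = \<Union>((\<lambda>S. \<Union>S) ` K)" by auto
    then show "\<Union>K \<subseteq> topspace X // R \<and> openin X (\<Union>(\<Union>K))" using K by auto
  qed
  then show ?thesis unfolding quotient_top_def by simp
qed

lemma quotient_top_topspace:
  assumes "equiv (topspace X) R"
  shows "topspace (quotient_top X R) = topspace X // R"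
proof -
  have "openin (quotient_top X R) (topspace X // R)"
    using assms by (simp add: quotient_top_open Union_quotient)
  then have "topspace X // R \<subseteq> topspace (quotient_top X R)"
    by (simp add: openin_subset)
  moreover have "topspace (quotient_top X R) \<subseteq> topspace X // R"
    using quotient_top_open[OF assms] unfolding topspace_def by auto
  ultimately show ?thesis by auto
qed

lemma class_image:
  assumes hm: "homeomorphic_maps X Y f g"
    and eX: "equiv (topspace X) R" and eY: "equiv (topspace Y) S"
    and corr: "\<And>x x'. x \<in> topspace X \<Longrightarrow> x' \<in> topspace X \<Longrightarrow> (f x, f x') \<in> S \<longleftrightarrow> (x, x') \<in> R"
    and x: "x \<in> topspace X"
  shows "f ` (R `` {x}) = S `` {f x}"
proof -
  have fX: "\<And>x. x \<in> topspace X \<Longrightarrow> f x \<in> topspace Y" and gY: "\<And>y. y \<in> topspace Y \<Longrightarrow> g y \<in> topspace X"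
    and fg: "\<And>y. y \<in> topspace Y \<Longrightarrow> f (g y) = y"
    using hm unfolding homeomorphic_maps_def continuous_map_def by auto
  have RX: "R \<subseteq> topspace X \<times> topspace X" and SY: "S \<subseteq> topspace Y \<times> topspace Y"
    using eX eY unfolding equiv_def refl_on_def by auto
  show ?thesis
  proof
    show "f ` (R `` {x}) \<subseteq> S `` {f x}" using corr x RX by auto
    show "S `` {f x} \<subseteq> f ` (R `` {x})"
    proof
      fix y assume "y \<in> S `` {f x}"
      then have y: "(f x, y) \<in> S" "y \<in> topspace Y" using SY by auto
      then have "(f x, f (g y)) \<in> S" using fg by simp
      then have "(x, g y) \<in> R" using corr x gY y by auto
      then show "y \<in> f ` (R `` {x})" using fg y by (metis ImageI image_eqI singletonI)
    qed
  qed
qed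

lemma quot_cont:
  assumes hm: "homeomorphic_maps X Y f g"
    and eX: "equiv (topspace X) R" and eY: "equiv (topspace Y) S"
    and corr: "\<And>x x'. x \<in> topspace X \<Longrightarrow> x' \<in> topspace X \<Longrightarrow> (f x, f x') \<in> S \<longleftrightarrow> (x, x') \<in> R"
  shows "continuous_map (quotient_top X R) (quotient_top Y S) (\<lambda>c. f ` c)"
proof -
  have fX: "\<And>x. x \<in> topspace X \<Longrightarrow> f x \<in> topspace Y" and cf: "continuous_map X Y f"
    using hm unfolding homeomorphic_maps_def continuous_map_def by auto
  note ci = class_image[OF hm eX eY corr]
  show ?thesis
    unfolding continuous_map_def
  proof (intro conjI allI impI)
    show "(\<lambda>c. f ` c) \<in> topspace (quotient_top X R) \<rightarrow> topspace (quotient_top Y S)"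
      using ci fX by (auto simp: quotient_top_topspace[OF eX] quotient_top_topspace[OF eY] quotient_def) blast
  next
    fix V assume "openin (quotient_top Y S) V"
    then have V: "V \<subseteq> topspace Y // S" "openin Y (\<Union>V)" using quotient_top_open[OF eY] by auto
    let ?P = "{c \<in> topspace (quotient_top X R). f ` c \<in> V}"
    have "\<Union>?P = {x \<in> topspace X. f x \<in> \<Union>V}"
    proof
      show "\<Union>?P \<subseteq> {x \<in> topspace X. f x \<in> \<Union>V}"
      proof
        fix x assume "x \<in> \<Union>?P"
        then obtain c where c: "c \<in> ?P" "x \<in> c" by auto
        then obtain x0 where "x0 \<in> topspace X" "c = R `` {x0}"
          by (auto simp: quotient_top_topspace[OF eX] quotient_def)
        then have "x \<in> topspace X" using c eX unfolding equiv_def refl_on_def by auto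
        then show "x \<in> {x \<in> topspace X. f x \<in> \<Union>V}" using c by auto
      qed
      show "{x \<in> topspace X. f x \<in> \<Union>V} \<subseteq> \<Union>?P"
      proof
        fix x assume x: "x \<in> {x \<in> topspace X. f x \<in> \<Union>V}"
        then obtain d where d: "d \<in> V" "f x \<in> d" by auto
        then obtain y where y: "y \<in> topspace Y" "d = S `` {y}" using V unfolding quotient_def by auto
        then have "d = S `` {f x}" using d eY by (metis equiv_class_eq_iff Image_singleton_iff)
        then have "f ` (R `` {x}) \<in> V" using ci x d by auto
        moreover have "R `` {x} \<in> topspace (quotient_top X R)"
          using x by (auto simp: quotient_top_topspace[OF eX] quotient_def)
        moreover have "x \<in> R `` {x}" using x eX unfolding equiv_def refl_on_def by auto
        ultimately show "x \<in> \<Union>?P" by blast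
      qed
    qed
    moreover have "openin X {x \<in> topspace X. f x \<in> \<Union>V}"
      using cf V(2) by (rule openin_continuous_map_preimage)
    ultimately show "openin (quotient_top X R) ?P"
      by (auto simp: quotient_top_open[OF eX] quotient_top_topspace[OF eX])
  qed
qed

lemma quot_conj:
  assumes hm: "homeomorphic_maps X Y f g"
    and eX: "equiv (topspace X) R" and eY: "equiv (topspace Y) S"
    and corr: "\<And>x x'. x \<in> topspace X \<Longrightarrow> x' \<in> topspace X \<Longrightarrow> (f x, f x') \<in> S \<longleftrightarrow> (x, x') \<in> R"
    and sX: "\<And>x. x \<in> topspace X \<Longrightarrow> s x \<in> topspace X"
    and sR: "\<And>x x'. (x, x') \<in> R \<Longrightarrow> (s x, s x') \<in> R"
    and comm: "\<And>x. x \<in> topspace X \<Longrightarrow> f (s x) = t (f x)"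
  shows "top_conjugate (quotient_top X R) (\<lambda>c. R `` {s (SOME x. x \<in> c)})
           (quotient_top Y S) (\<lambda>c. S `` {t (SOME y. y \<in> c)})"
proof -
  have hm': "homeomorphic_maps Y X g f" using hm homeomorphic_maps_sym by metis
  have fX: "\<And>x. x \<in> topspace X \<Longrightarrow> f x \<in> topspace Y" and gY: "\<And>y. y \<in> topspace Y \<Longrightarrow> g y \<in> topspace X"
    and fg: "\<And>y. y \<in> topspace Y \<Longrightarrow> f (g y) = y" and gf: "\<And>x. x \<in> topspace X \<Longrightarrow> g (f x) = x"
    using hm unfolding homeomorphic_maps_def continuous_map_def by auto
  have corr': "\<And>y y'. y \<in> topspace Y \<Longrightarrow> y' \<in> topspace Y \<Longrightarrow> (g y, g y') \<in> R \<longleftrightarrow> (y, y') \<in> S"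
  proof -
    fix y y' assume yy: "y \<in> topspace Y" "y' \<in> topspace Y"
    have "(g y, g y') \<in> R \<longleftrightarrow> (f (g y), f (g y')) \<in> S" using corr gY yy by simp
    then show "(g y, g y') \<in> R \<longleftrightarrow> (y, y') \<in> S" using fg yy by simp
  qed
  have RX: "R \<subseteq> topspace X \<times> topspace X"
    using eX unfolding equiv_def refl_on_def by auto
  have h: "homeomorphic_maps (quotient_top X R) (quotient_top Y S) (\<lambda>c. f ` c) (\<lambda>c. g ` c)"
    unfolding homeomorphic_maps_def
  proof (intro conjI ballI)
    show "continuous_map (quotient_top X R) (quotient_top Y S) ((`) f)"
      by (rule quot_cont[OF hm eX eY corr])
    show "continuous_map (quotient_top Y S) (quotient_top X R) ((`) g)"
      by (rule quot_cont[OF hm' eY eX corr'])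
  next
    fix c assume "c \<in> topspace (quotient_top X R)"
    then have "c \<subseteq> topspace X" using RX
      by (auto simp: quotient_top_topspace[OF eX] quotient_def) 
    then show "g ` f ` c = c" using gf by (simp add: image_image subset_iff cong: image_cong)
  next
    fix c assume "c \<in> topspace (quotient_top Y S)"
    then have "c \<subseteq> topspace Y" using eY unfolding equiv_def refl_on_def
      by (auto simp: quotient_top_topspace[OF eY] quotient_def) 
    then show "f ` g ` c = c" using fg by (simp add: image_image subset_iff cong: image_cong)
  qed
  show ?thesis
    unfolding top_conjugate_def
  proof (intro exI conjI ballI)
    show "homeomorphic_map (quotient_top X R) (quotient_top Y S) ((`) f)"
      using h homeomorphic_maps_imp_map by blast
  next
    fix c assume "c \<in> topspace (quotient_top X R)"
    then obtain x where x: "x \<in> topspace X" "c = R `` {x}"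
      by (auto simp: quotient_top_topspace[OF eX] quotient_def)
    have xc: "x \<in> c" using x eX unfolding equiv_def refl_on_def by auto
    define x0 where "x0 = (SOME x. x \<in> c)"
    have x0: "x0 \<in> c" unfolding x0_def using xc by (rule someI)
    then have x0R: "(x, x0) \<in> R" "x0 \<in> topspace X" using x RX by auto
    define y1 where "y1 = (SOME y. y \<in> f ` c)"
    have "f x \<in> f ` c" using xc by simp
    then have "y1 \<in> f ` c" unfolding y1_def by (rule someI)
    then obtain x1 where x1: "x1 \<in> c" "y1 = f x1" by auto
    then have x1R: "(x, x1) \<in> R" "x1 \<in> topspace X" using x RX by auto
    have "(x0, x1) \<in> R" using x0R(1) x1R(1) eX unfolding equiv_def sym_def trans_def by blast
    then have "(s x0, s x1) \<in> R" by (rule sR)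
    then have eqc: "R `` {s x0} = R `` {s x1}" using eX by (simp add: equiv_class_eq)
    have a: "f ` (R `` {s x1}) = S `` {f (s x1)}" using class_image[OF hm eX eY corr sX[OF x1R(2)]] .
    have b: "f (s x1) = t y1" using comm[OF x1R(2)] x1(2) by simp
    have "f ` (R `` {s x0}) = S `` {t y1}" using a b eqc by simp
    then show "f ` (R `` {s (SOME x. x \<in> c)}) = S `` {t (SOME y. y \<in> f ` c)}"
      unfolding x0_def[symmetric] y1_def[symmetric] .
  qed
qed


locale ep =
  fixes E :: "('v,'e) dgraph" and H :: "('hv,'he) dgraph"
    and \<xi>v :: "'hv \<Rightarrow> 'v" and \<xi>0 \<xi>1 :: "'he \<Rightarrow> 'e"
  assumes fE: "finite_graph E" and fH: "finite_graph H"
    and emb: "embedding_pair H E \<xi>v \<xi>0 \<xi>1"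
begin

abbreviation "HE \<equiv> \<xi>0 ` edges H \<union> \<xi>1 ` edges H"
abbreviation "xa \<equiv> xi_act H \<xi>0 \<xi>1"
abbreviation "xr \<equiv> xi_res H \<xi>0 \<xi>1"
abbreviation "V \<equiv> os_verts H E \<xi>0 \<xi>1"
abbreviation "\<pi> \<equiv> os_pi H E \<xi>0 \<xi>1"
abbreviation "\<beta> \<equiv> os_beta E"

definition idx :: "'e \<Rightarrow> nat" where
  "idx e = (if e \<in> \<xi>1 ` edges H then 1 else 0)"

lemma inj0: "h \<in> edges H \<Longrightarrow> h' \<in> edges H \<Longrightarrow> \<xi>0 h = \<xi>0 h' \<longleftrightarrow> h = h'"
  using emb unfolding embedding_pair_def inj_on_def by blast
lemma inj1: "h \<in> edges H \<Longrightarrow> h' \<in> edges H \<Longrightarrow> \<xi>1 h = \<xi>1 h' \<longleftrightarrow> h = h'"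
  using emb unfolding embedding_pair_def inj_on_def by blast
lemma disj01: "h \<in> edges H \<Longrightarrow> h' \<in> edges H \<Longrightarrow> \<xi>0 h \<noteq> \<xi>1 h'"
  using emb unfolding embedding_pair_def by blast
lemma xi_edges: "h \<in> edges H \<Longrightarrow> \<xi>0 h \<in> edges E" "h \<in> edges H \<Longrightarrow> \<xi>1 h \<in> edges E"
  using emb unfolding embedding_pair_def by blast+
lemma xi_rs: "h \<in> edges H \<Longrightarrow> rng E (\<xi>0 h) = rng E (\<xi>1 h)" "h \<in> edges H \<Longrightarrow> src E (\<xi>0 h) = src E (\<xi>1 h)"
  using emb unfolding embedding_pair_def by auto

lemma the0: "h \<in> edges H \<Longrightarrow> (THE h'. h' \<in> edges H \<and> (\<xi>0 h = \<xi>0 h' \<or> \<xi>0 h = \<xi>1 h')) = h"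
  by (rule the_equality) (auto simp: inj0 disj01)
lemma the1: "h \<in> edges H \<Longrightarrow> (THE h'. h' \<in> edges H \<and> (\<xi>1 h = \<xi>0 h' \<or> \<xi>1 h = \<xi>1 h')) = h"
  by (rule the_equality) (auto simp: inj1 dest: disj01[THEN not_sym])

lemma xa0: "h \<in> edges H \<Longrightarrow> xa m (\<xi>0 h) = (if even m then \<xi>0 h else \<xi>1 h)"
  unfolding xi_act_def using the0[of h] by (auto simp: Let_def even_iff_mod_2_eq_zero)
lemma xr0: "h \<in> edges H \<Longrightarrow> xr m (\<xi>0 h) = m div 2"
  unfolding xi_res_def using the0[of h] by (auto simp: Let_def)
lemma odd_p1: "((m::int) + 1) mod 2 = 0 \<longleftrightarrow> odd m"
  by presburger
lemma xa1: "h \<in> edges H \<Longrightarrow> xa m (\<xi>1 h) = (if odd m then \<xi>0 h else \<xi>1 h)"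
  unfolding xi_act_def using the1[of h] disj01[of h h]
  by (auto simp: Let_def odd_p1)
lemma xr1: "h \<in> edges H \<Longrightarrow> xr m (\<xi>1 h) = (m + 1) div 2"
  unfolding xi_res_def using the1[of h] by (auto simp: Let_def dest: disj01[THEN not_sym])
lemma xaN: "e \<notin> HE \<Longrightarrow> xa m e = e" "e \<notin> HE \<Longrightarrow> xr m e = 0"
  unfolding xi_act_def xi_res_def by auto

lemma idx0: "h \<in> edges H \<Longrightarrow> idx (\<xi>0 h) = 0"
  unfolding idx_def using disj01 by auto
lemma idx1: "h \<in> edges H \<Longrightarrow> idx (\<xi>1 h) = 1"
  unfolding idx_def by auto
lemma idxN: "e \<notin> HE \<Longrightarrow> idx e = 0"
  unfolding idx_def by auto

lemma HE_cases:
  obtains (N) "e \<notin> HE" | (X0) h where "h \<in> edges H" "e = \<xi>0 h" | (X1) h where "h \<in> edges H" "e = \<xi>1 h"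
  by blast

lemma ar1: "(a + b) div 2 = (if even b then a div 2 else (a+1) div 2) + b div (2::int)"
proof (cases "even b")
  case True
  then obtain c where "b = 2 * c" by blast
  then show ?thesis by simp
next
  case False
  then obtain c where "b = 2 * c + 1" using oddE by blast
  then show ?thesis by (simp add: algebra_simps)
qed
lemma ar2: "(a + b + 1) div 2 = (if odd b then a div 2 else (a+1) div 2) + (b+1) div (2::int)"
proof (cases "even b")
  case True
  then obtain c where "b = 2 * c" by blast
  then show ?thesis by (simp add: algebra_simps)
next
  case False
  then obtain c where "b = 2 * c + 1" using oddE by blast
  then have "a + b + 1 = a + 2 * (c + 1)" "b + 1 = 2 * (c + 1)" by simp_all
  then show ?thesis using False by simp
qed

lemma cocycle_act: "xa (a + b) e = xa a (xa b e)"
proof (cases e rule: HE_cases)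
  case N then show ?thesis by (simp add: xaN)
next
  case (X0 h) then show ?thesis using disj01[of h h] by (auto simp: xa0 xa1)
next
  case (X1 h) then show ?thesis using disj01[of h h] by (auto simp: xa0 xa1)
qed

lemma cocycle_res: "xr (a + b) e = xr a (xa b e) + xr b e"
proof (cases e rule: HE_cases)
  case N then show ?thesis by (simp add: xaN)
next
  case (X0 h) then show ?thesis using ar1[of a b] by (auto simp: xa0 xa1 xr0 xr1)
next
  case (X1 h) then show ?thesis using ar2[of a b] by (auto simp: xa0 xa1 xr0 xr1 add.assoc)
qed

lemma zpath_add: "zpath xa xr (a + b) \<mu> = zpath xa xr a (zpath xa xr b \<mu>)"
  by (induction \<mu> arbitrary: a b) (simp_all add: cocycle_act cocycle_res)

lemma xa_zero: "xa 0 e = e" "xr 0 e = 0"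
  by (cases e rule: HE_cases; simp add: xaN xa0 xa1 xr0 xr1)+

lemma zpath_zero: "zpath xa xr 0 \<mu> = \<mu>"
  by (induction \<mu>) (simp_all add: xa_zero)

definition Srel :: "'e rel" where
  "Srel = {(a,b). a = b \<or> (\<exists>h\<in>edges H. (a = \<xi>0 h \<and> b = \<xi>1 h) \<or> (a = \<xi>1 h \<and> b = \<xi>0 h))}"

lemma Srel_trans: "trans Srel"
  unfolding trans_def Srel_def
  by (auto simp: inj0 inj1 dest: disj01 disj01[THEN not_sym])

lemma xi_rel_eq: "xi_rel H E \<xi>0 \<xi>1 = Srel"
proof
  show "xi_rel H E \<xi>0 \<xi>1 \<subseteq> Srel"
    unfolding xi_rel_def
  proof (rule subrelI)
    fix a b assume "(a, b) \<in> ({(\<xi>0 h, \<xi>1 h) |h. h \<in> edges H} \<union> {(\<xi>1 h, \<xi>0 h) |h. h \<in> edges H} \<union> Id_on (edges E))\<^sup>*"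
    then show "(a, b) \<in> Srel"
    proof (induction rule: rtrancl_induct)
      case base then show ?case by (simp add: Srel_def)
    next
      case (step b c)
      then have "(b, c) \<in> Srel" by (auto simp: Srel_def)
      then show ?case using step Srel_trans unfolding trans_def by blast
    qed
  qed
  show "Srel \<subseteq> xi_rel H E \<xi>0 \<xi>1"
    unfolding xi_rel_def Srel_def by (auto intro: r_into_rtrancl)
qed

lemma Srel_equiv: "equiv UNIV Srel"
  unfolding equiv_def refl_on_def sym_def using Srel_trans by (auto simp: Srel_def)

lemma pi_eq: "\<pi> e = Srel `` {e}"
  by (simp add: os_pi_def xi_rel_eq)

lemma pi_eq_iff: "\<pi> e = \<pi> e' \<longleftrightarrow> (e, e') \<in> Srel"
  unfolding pi_eq using Srel_equiv by (simp add: equiv_class_eq_iff)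

lemma V_eq: "V = \<pi> ` edges E"
  unfolding os_verts_def xi_rel_eq quotient_def pi_eq by auto

lemma pi_in_V: "e \<in> edges E \<Longrightarrow> \<pi> e \<in> V"
  using V_eq by auto

lemma V_finite: "finite V"
  using fE V_eq unfolding finite_graph_def by auto

lemma Srel_rs: "(e, e') \<in> Srel \<Longrightarrow> rng E e = rng E e' \<and> src E e = src E e'"
  unfolding Srel_def using xi_rs by auto

lemma Srel_edges: "(e, e') \<in> Srel \<Longrightarrow> e \<in> edges E \<Longrightarrow> e' \<in> edges E"
  unfolding Srel_def using xi_edges by auto

lemma beta_pi: "\<beta> (\<pi> e) = src E e"
proof -
  have "e \<in> \<pi> e" unfolding pi_eq by (simp add: Srel_def)
  then have "(SOME e'. e' \<in> \<pi> e) \<in> \<pi> e" by (rule someI)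
  then show ?thesis unfolding os_beta_def pi_eq using Srel_rs by auto
qed

lemma pi_idx_inj: "e \<in> edges E \<Longrightarrow> e' \<in> edges E \<Longrightarrow> \<pi> e = \<pi> e' \<Longrightarrow> idx e = idx e' \<Longrightarrow> e = e'"
  unfolding pi_eq_iff Srel_def using idx0 idx1 by auto

lemma pi_xa: "\<pi> (xa m e) = \<pi> e"
  unfolding pi_eq_iff
  by (cases e rule: HE_cases) (auto simp: xaN xa0 xa1 Srel_def)

lemma xa_edges: "e \<in> edges E \<Longrightarrow> xa m e \<in> edges E"
  by (cases e rule: HE_cases) (auto simp: xaN xa0 xa1 xi_edges)

lemma xa_rs: "rng E (xa m e) = rng E e" "src E (xa m e) = src E e"
  using Srel_rs pi_xa[of m e] unfolding pi_eq_iff by metis+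

end


primrec Phi :: "('e \<Rightarrow> 'w) \<Rightarrow> ('e \<Rightarrow> nat) \<Rightarrow> 'w \<Rightarrow> 'e list \<Rightarrow> ('w \<times> 'w \<times> nat) list" where
  "Phi p ix w [] = []"
| "Phi p ix w (e # \<mu>) = (w, p e, ix e) # Phi p ix (p e) \<mu>"

context ep
begin

abbreviation "Gx \<equiv> G_xi H E \<xi>0 \<xi>1"
abbreviation "OS \<equiv> out_split Gx V \<pi> \<beta>"
abbreviation "A \<equiv> (\<lambda>v w. card {f \<in> edges OS. rng OS f = v \<and> src OS f = w})"
abbreviation "B \<equiv> (\<lambda>v w. max 0 (int (A v w) - 1))"
abbreviation "KG \<equiv> kat_graph V A"
abbreviation "K \<equiv> KEP V A B"
abbreviation "ka \<equiv> kat_act A B"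
abbreviation "kr \<equiv> kat_res A B"
abbreviation "\<Phi> \<equiv> Phi \<pi> idx"

lemma Gx_eq: "Gx = zquot E xa xr"
  by (simp add: G_xi_def)

lemma K_eq: "K = zquot KG ka kr"
  by (simp add: KEP_def)

lemma OS_simps:
  "verts OS = V"
  "edges OS = {(v,e). v \<in> V \<and> e \<in> edges E \<and> \<beta> v = rng E e}"
  "rng OS = fst" "src OS = (\<lambda>(v,e). \<pi> e)"
  "grp OS = {(g,v). g \<in> grp Gx \<and> v \<in> V \<and> snd g = \<beta> v \<and> snd g = \<beta> v}"
  "dom OS = snd" "cod OS = snd"
  "mul OS = (\<lambda>(g,v) (h,w). (mul Gx g h, v))"
  "act OS = (\<lambda>(g,v) (w,e). (w, act Gx g e))"
  "res OS = (\<lambda>(g,v) (w,e). (res Gx g e, \<pi> e))"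
  by (simp_all add: out_split_def Gx_eq zquot_simps)

lemma KG_simps:
  "verts KG = V" "edges KG = {(i,j,m). i \<in> V \<and> j \<in> V \<and> m < A i j}"
  "rng KG = (\<lambda>(i,j,m). i)" "src KG = (\<lambda>(i,j,m). j)"
  by (simp_all add: kat_graph_def)

lemma Srel_class0: "h \<in> edges H \<Longrightarrow> Srel `` {\<xi>0 h} = {\<xi>0 h, \<xi>1 h}"
  unfolding Srel_def by (auto simp: inj0 inj1 dest: disj01 disj01[THEN not_sym])
lemma Srel_class1: "h \<in> edges H \<Longrightarrow> Srel `` {\<xi>1 h} = {\<xi>0 h, \<xi>1 h}"
  unfolding Srel_def by (auto simp: inj0 inj1 dest: disj01 disj01[THEN not_sym])
lemma Srel_classN: "e \<notin> HE \<Longrightarrow> Srel `` {e} = {e}"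
  unfolding Srel_def by auto

lemma card_class: "card (Srel `` {e}) = (if e \<in> HE then 2 else 1)"
proof (cases e rule: HE_cases)
  case N then show ?thesis by (simp add: Srel_classN)
next
  case (X0 h) then show ?thesis using disj01[of h h] by (auto simp: Srel_class0)
next
  case (X1 h) then show ?thesis using disj01[of h h] by (auto simp: Srel_class1)
qed

lemma A_set:
  assumes "v \<in> V" "e \<in> edges E" "\<beta> v = rng E e"
  shows "{f \<in> edges OS. rng OS f = v \<and> src OS f = \<pi> e} = Pair v ` (Srel `` {e})"
proof -
  have "\<And>e'. \<pi> e' = \<pi> e \<longleftrightarrow> e' \<in> Srel `` {e}"
    using pi_eq_iff Srel_equiv unfolding equiv_def sym_def by auto
  moreover have "\<And>e'. e' \<in> Srel `` {e} \<Longrightarrow> e' \<in> edges E \<and> rng E e' = rng E e"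
    using Srel_edges Srel_rs assms(2) by auto
  ultimately show ?thesis using assms by (auto simp: OS_simps)
qed

lemma A_val:
  assumes "v \<in> V" "e \<in> edges E" "\<beta> v = rng E e"
  shows "A v (\<pi> e) = (if e \<in> HE then 2 else 1)"
  unfolding A_set[OF assms] by (simp add: card_image card_class inj_on_def)

lemma B_val:
  assumes "v \<in> V" "e \<in> edges E" "\<beta> v = rng E e"
  shows "B v (\<pi> e) = (if e \<in> HE then 1 else 0)"
  using A_val[OF assms] by simp

lemma A_pos:
  assumes "v \<in> V" "w \<in> V" "0 < A v w"
  shows "\<exists>e\<in>edges E. \<beta> v = rng E e \<and> w = \<pi> e"
proof -
  have "{f \<in> edges OS. rng OS f = v \<and> src OS f = w} \<noteq> {}"
    using assms(3) by (metis card.empty less_irrefl)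
  then show ?thesis by (auto simp: OS_simps)
qed

lemma decode:
  assumes "(i, j, m) \<in> edges KG"
  shows "\<exists>e\<in>edges E. \<beta> i = rng E e \<and> \<pi> e = j \<and> idx e = m"
proof -
  have ijm: "i \<in> V" "j \<in> V" "m < A i j" using assms by (auto simp: KG_simps)
  then obtain e where e: "e \<in> edges E" "\<beta> i = rng E e" "j = \<pi> e" using A_pos by force
  have Av: "A i j = (if e \<in> HE then 2 else 1)" using A_val[OF ijm(1) e(1,2)] e(3) by simp
  show ?thesis
  proof (cases e rule: HE_cases)
    case N
    then show ?thesis using Av ijm e by (auto simp: idxN)
  next
    case (X0 h)
    have e1: "\<xi>1 h \<in> edges E" "rng E (\<xi>1 h) = rng E e" "\<pi> (\<xi>1 h) = \<pi> e"
      using X0 xi_edges xi_rs pi_eq_iff by (auto simp: Srel_def)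
    show ?thesis
    proof (cases "m = 0")
      case True then show ?thesis using X0 e idx0 by auto
    next
      case False then have "m = 1" using Av ijm X0 by auto
      then show ?thesis using e1 e X0 idx1 by metis
    qed
  next
    case (X1 h)
    have e0: "\<xi>0 h \<in> edges E" "rng E (\<xi>0 h) = rng E e" "\<pi> (\<xi>0 h) = \<pi> e"
      using X1 xi_edges xi_rs pi_eq_iff by (auto simp: Srel_def)
    show ?thesis
    proof (cases "m = 0")
      case True then show ?thesis using e0 e X1 idx0 by metis
    next
      case False then have "m = 1" using Av ijm X1 by auto
      then show ?thesis using X1 e idx1 by auto
    qed
  qed
qed

lemma pi01: "h \<in> edges H \<Longrightarrow> \<pi> (\<xi>1 h) = \<pi> (\<xi>0 h)"
  unfolding pi_eq_iff Srel_def by auto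

lemma phi_edge:
  assumes "v \<in> V" "e \<in> edges E" "\<beta> v = rng E e"
  shows "(v, \<pi> e, idx e) \<in> edges KG"
  using A_val[OF assms] assms pi_in_V by (auto simp: KG_simps idx_def)

lemma local_act:
  assumes "v \<in> V" "e \<in> edges E" "\<beta> v = rng E e"
  shows "ka k (v, \<pi> e, idx e) = (v, \<pi> (xa k e), idx (xa k e))"
    "kr k (v, \<pi> e, idx e) = xr k e"
proof -
  note AB = A_val[OF assms] B_val[OF assms]
  have "ka k (v, \<pi> e, idx e) = (v, \<pi> e, nat ((k * B v (\<pi> e) + int (idx e)) mod int (A v (\<pi> e))))"
    by (simp add: kat_act_def)
  also have "\<dots> = (v, \<pi> (xa k e), idx (xa k e))"
  proof (cases e rule: HE_cases)
    case N then show ?thesis using AB by (simp add: xaN idxN)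
  next
    case (X0 h) then show ?thesis using AB
      by (auto simp: xa0 idx0 idx1 pi01 even_iff_mod_2_eq_zero)
  next
    case (X1 h) then show ?thesis using AB
      by (auto simp: xa1 idx0 idx1 pi01 even_iff_mod_2_eq_zero odd_p1[symmetric])
         presburger
  qed
  finally show "ka k (v, \<pi> e, idx e) = (v, \<pi> (xa k e), idx (xa k e))" .
  have "kr k (v, \<pi> e, idx e) = (k * B v (\<pi> e) + int (idx e)) div int (A v (\<pi> e))"
    by (simp add: kat_res_def)
  also have "\<dots> = xr k e"
    by (cases e rule: HE_cases) (use AB in \<open>auto simp: xaN xr0 xr1 idxN idx0 idx1\<close>)
  finally show "kr k (v, \<pi> e, idx e) = xr k e" .
qed

end


context ep
begin

lemma zpath_path:
  assumes "is_path E \<mu>"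
  shows "is_path E (zpath xa xr k \<mu>) \<and> (\<mu> \<noteq> [] \<longrightarrow> zpath xa xr k \<mu> \<noteq> [] \<and> rng E (hd (zpath xa xr k \<mu>)) = rng E (hd \<mu>))"
  using assms
proof (induction \<mu> arbitrary: k)
  case Nil then show ?case by simp
next
  case (Cons e \<nu>)
  then have IH: "is_path E (zpath xa xr (xr k e) \<nu>) \<and> (\<nu> \<noteq> [] \<longrightarrow> zpath xa xr (xr k e) \<nu> \<noteq> [] \<and> rng E (hd (zpath xa xr (xr k e) \<nu>)) = rng E (hd \<nu>))"
    by (simp add: is_path_Cons)
  have "zpath xa xr (xr k e) \<nu> = [] \<longleftrightarrow> \<nu> = []" by (cases \<nu>) auto
  then show ?case using Cons.prems IH by (auto simp: is_path_Cons xa_edges xa_rs)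
qed

lemma zpath_edges: "set \<mu> \<subseteq> edges E \<Longrightarrow> set (zpath xa xr k \<mu>) \<subseteq> edges E"
  by (induction \<mu> arbitrary: k) (auto simp: xa_edges)

lemma Phi_path:
  assumes "w \<in> V" "is_path E \<mu>" "\<mu> \<noteq> [] \<longrightarrow> rng E (hd \<mu>) = \<beta> w"
  shows "is_path KG (\<Phi> w \<mu>) \<and> (\<mu> \<noteq> [] \<longrightarrow> \<Phi> w \<mu> \<noteq> [] \<and> rng KG (hd (\<Phi> w \<mu>)) = w)"
  using assms
proof (induction \<mu> arbitrary: w)
  case Nil then show ?case by simp
next
  case (Cons e \<nu>)
  have e: "e \<in> edges E" "rng E e = \<beta> w" using Cons.prems by (auto simp: is_path_Cons)
  have IH: "is_path KG (\<Phi> (\<pi> e) \<nu>) \<and> (\<nu> \<noteq> [] \<longrightarrow> \<Phi> (\<pi> e) \<nu> \<noteq> [] \<and> rng KG (hd (\<Phi> (\<pi> e) \<nu>)) = \<pi> e)"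
    using Cons.prems by (intro Cons.IH) (auto simp: is_path_Cons pi_in_V beta_pi)
  have ed: "(w, \<pi> e, idx e) \<in> edges KG" using phi_edge[OF Cons.prems(1) e(1)] e by simp
  have "\<Phi> (\<pi> e) \<nu> = [] \<longleftrightarrow> \<nu> = []" by (cases \<nu>) auto
  then show ?case using IH ed by (auto simp: is_path_Cons KG_simps)
qed

lemma Phi_zpath:
  assumes "w \<in> V" "is_path E \<mu>" "\<mu> \<noteq> [] \<longrightarrow> rng E (hd \<mu>) = \<beta> w"
  shows "zpath ka kr k (\<Phi> w \<mu>) = \<Phi> w (zpath xa xr k \<mu>)"
  using assms
proof (induction \<mu> arbitrary: w k)
  case Nil then show ?case by simp
next
  case (Cons e \<nu>)
  have e: "e \<in> edges E" "\<beta> w = rng E e" using Cons.prems by (auto simp: is_path_Cons)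
  have IH: "zpath ka kr (xr k e) (\<Phi> (\<pi> e) \<nu>) = \<Phi> (\<pi> e) (zpath xa xr (xr k e) \<nu>)"
    using Cons.prems by (intro Cons.IH) (auto simp: is_path_Cons pi_in_V beta_pi)
  show ?case using local_act[OF Cons.prems(1) e] IH by (simp add: pi_xa)
qed

lemma Phi_inj:
  assumes "set \<mu> \<subseteq> edges E" "set \<mu>' \<subseteq> edges E" "\<Phi> w \<mu> = \<Phi> w' \<mu>'"
  shows "\<mu> = \<mu>'"
  using assms
proof (induction \<mu> arbitrary: \<mu>' w w')
  case Nil then show ?case by (cases \<mu>') auto
next
  case (Cons e \<nu>)
  then obtain e' \<nu>' where m': "\<mu>' = e' # \<nu>'" by (cases \<mu>') auto
  then have "\<pi> e = \<pi> e'" "idx e = idx e'" "\<Phi> (\<pi> e) \<nu> = \<Phi> (\<pi> e') \<nu>'" using Cons.prems by auto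
  then show ?case using Cons.prems Cons.IH[of \<nu>' "\<pi> e" "\<pi> e'"] pi_idx_inj m' by auto
qed

lemma Phi_surj:
  assumes "w \<in> V" "is_path KG \<nu>" "\<nu> \<noteq> [] \<longrightarrow> rng KG (hd \<nu>) = w"
  shows "\<exists>\<mu>. is_path E \<mu> \<and> (\<mu> \<noteq> [] \<longrightarrow> rng E (hd \<mu>) = \<beta> w) \<and> \<Phi> w \<mu> = \<nu>"
  using assms
proof (induction \<nu> arbitrary: w)
  case Nil then show ?case by (intro exI[of _ "[]"]) simp
next
  case (Cons x \<nu>')
  obtain i j m where x: "x = (i, j, m)" by (cases x) auto
  have xe: "(i, j, m) \<in> edges KG" and iw: "i = w" using Cons.prems x by (auto simp: is_path_Cons KG_simps)
  obtain e where e: "e \<in> edges E" "\<beta> i = rng E e" "\<pi> e = j" "idx e = m" using decode[OF xe] by blast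
  have jV: "j \<in> V" using xe by (simp add: KG_simps)
  obtain \<mu>' where mu': "is_path E \<mu>'" "\<mu>' \<noteq> [] \<longrightarrow> rng E (hd \<mu>') = \<beta> j" "\<Phi> j \<mu>' = \<nu>'"
    using Cons.IH[OF jV] Cons.prems x by (auto simp: is_path_Cons KG_simps)
  have "is_path E (e # \<mu>')" using mu' e beta_pi by (auto simp: is_path_Cons)
  moreover have "\<Phi> w (e # \<mu>') = x # \<nu>'" using e mu' x iw by simp
  ultimately show ?case using e iw by (intro exI[of _ "e # \<mu>'"]) auto
qed

lemma cls_corr:
  assumes "w \<in> V"
  shows "zcls E xa xr m (\<beta> w) = zcls E xa xr n (\<beta> w) \<longleftrightarrow> zcls KG ka kr m w = zcls KG ka kr n w"
  unfolding zcls_eq_iff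
proof
  assume L: "\<forall>\<mu>. is_path E \<mu> \<and> \<mu> \<noteq> [] \<and> rng E (hd \<mu>) = \<beta> w \<longrightarrow> zpath xa xr m \<mu> = zpath xa xr n \<mu>"
  show "\<forall>\<nu>. is_path KG \<nu> \<and> \<nu> \<noteq> [] \<and> rng KG (hd \<nu>) = w \<longrightarrow> zpath ka kr m \<nu> = zpath ka kr n \<nu>"
  proof (intro allI impI)
    fix \<nu> assume \<nu>: "is_path KG \<nu> \<and> \<nu> \<noteq> [] \<and> rng KG (hd \<nu>) = w"
    then obtain \<mu> where \<mu>: "is_path E \<mu>" "\<mu> \<noteq> [] \<longrightarrow> rng E (hd \<mu>) = \<beta> w" "\<Phi> w \<mu> = \<nu>"
      using Phi_surj[OF assms] by blast
    then have ne: "\<mu> \<noteq> []" using \<nu> by auto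
    have eq: "zpath xa xr m \<mu> = zpath xa xr n \<mu>" using L \<mu>(1,2) ne by auto
    have a: "zpath ka kr m \<nu> = \<Phi> w (zpath xa xr m \<mu>)" using Phi_zpath[OF assms \<mu>(1,2), of m] \<mu>(3) by simp
    have b: "zpath ka kr n \<nu> = \<Phi> w (zpath xa xr n \<mu>)" using Phi_zpath[OF assms \<mu>(1,2), of n] \<mu>(3) by simp
    show "zpath ka kr m \<nu> = zpath ka kr n \<nu>" using a b eq by simp
  qed
next
  assume R: "\<forall>\<nu>. is_path KG \<nu> \<and> \<nu> \<noteq> [] \<and> rng KG (hd \<nu>) = w \<longrightarrow> zpath ka kr m \<nu> = zpath ka kr n \<nu>"
  show "\<forall>\<mu>. is_path E \<mu> \<and> \<mu> \<noteq> [] \<and> rng E (hd \<mu>) = \<beta> w \<longrightarrow> zpath xa xr m \<mu> = zpath xa xr n \<mu>"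
  proof (intro allI impI)
    fix \<mu> assume \<mu>: "is_path E \<mu> \<and> \<mu> \<noteq> [] \<and> rng E (hd \<mu>) = \<beta> w"
    have p: "is_path KG (\<Phi> w \<mu>) \<and> \<Phi> w \<mu> \<noteq> [] \<and> rng KG (hd (\<Phi> w \<mu>)) = w"
      using Phi_path[OF assms, of \<mu>] \<mu> by auto
    have "zpath ka kr m (\<Phi> w \<mu>) = zpath ka kr n (\<Phi> w \<mu>)"
      using R p by blast
    moreover have "zpath ka kr m (\<Phi> w \<mu>) = \<Phi> w (zpath xa xr m \<mu>)" "zpath ka kr n (\<Phi> w \<mu>) = \<Phi> w (zpath xa xr n \<mu>)"
      using Phi_zpath[OF assms] \<mu> by auto
    ultimately have "\<Phi> w (zpath xa xr m \<mu>) = \<Phi> w (zpath xa xr n \<mu>)" by simp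
    moreover have "set (zpath xa xr m \<mu>) \<subseteq> edges E" "set (zpath xa xr n \<mu>) \<subseteq> edges E"
      using \<mu> zpath_edges unfolding is_path_def by blast+
    ultimately show "zpath xa xr m \<mu> = zpath xa xr n \<mu>" using Phi_inj by blast
  qed
qed

end


context ep
begin

abbreviation "\<phi>1 \<equiv> (\<lambda>(v::'e set, e::'e). (v, \<pi> e, idx e))"
abbreviation "\<psi> \<equiv> (\<lambda>(g, v::'e set). zcls KG ka kr (zrep g) v)"

lemma K_simps:
  "verts K = V" "edges K = edges KG" "rng K = rng KG" "src K = src KG"
  "grp K = {zcls KG ka kr m v | m v. v \<in> V}"
  "dom K = snd" "cod K = snd"
  "mul K = (\<lambda>g h. zcls KG ka kr (zrep g + zrep h) (snd g))"
  "act K = (\<lambda>g e. ka (zrep g) e)"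
  "res K = (\<lambda>g e. zcls KG ka kr (kr (zrep g) e) (src KG e))"
  by (simp_all add: K_eq zquot_simps KG_simps)

lemma Gx_simps:
  "grp Gx = {zcls E xa xr m v | m v. v \<in> verts E}"
  "mul Gx = (\<lambda>g h. zcls E xa xr (zrep g + zrep h) (snd g))"
  "act Gx = (\<lambda>g e. xa (zrep g) e)"
  "res Gx = (\<lambda>g e. zcls E xa xr (xr (zrep g) e) (src E e))"
  by (simp_all add: Gx_eq zquot_simps)

lemma beta_verts: "v \<in> V \<Longrightarrow> \<beta> v \<in> verts E"
  using V_eq beta_pi fE unfolding finite_graph_def by auto

lemma zcls_zrep_K: "v \<in> V \<Longrightarrow> zcls KG ka kr (zrep (zcls E xa xr m (\<beta> v))) v = zcls KG ka kr m v"
  by (rule cls_corr[THEN iffD1, OF _ zrep_zcls])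

lemma E_add_cong:
  assumes "zcls E xa xr a w = zcls E xa xr a' w" "zcls E xa xr b w = zcls E xa xr b' w"
  shows "zcls E xa xr (a + b) w = zcls E xa xr (a' + b') w"
  unfolding zcls_eq_iff
proof (intro allI impI)
  fix \<mu> assume \<mu>: "is_path E \<mu> \<and> \<mu> \<noteq> [] \<and> rng E (hd \<mu>) = w"
  have 1: "zpath xa xr b \<mu> = zpath xa xr b' \<mu>" using assms(2) \<mu> unfolding zcls_eq_iff by blast
  have p: "is_path E (zpath xa xr b \<mu>) \<and> zpath xa xr b \<mu> \<noteq> [] \<and> rng E (hd (zpath xa xr b \<mu>)) = w"
    using zpath_path[of \<mu> b] \<mu> by auto
  have 2: "zpath xa xr a (zpath xa xr b \<mu>) = zpath xa xr a' (zpath xa xr b \<mu>)"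
    using assms(1) p unfolding zcls_eq_iff by blast
  show "zpath xa xr (a + b) \<mu> = zpath xa xr (a' + b') \<mu>"
    using 1 2 by (simp add: zpath_add)
qed

lemma grpOS_elim:
  assumes "(g, v) \<in> grp OS"
  shows "v \<in> V" "snd g = \<beta> v" "g = zcls E xa xr (zrep g) (\<beta> v)" "g \<in> grp Gx"
proof -
  have 1: "g \<in> grp Gx" "v \<in> V" "snd g = \<beta> v" using assms by (auto simp: OS_simps)
  have 2: "g \<in> grp (zquot E xa xr)" using 1(1) by (simp only: Gx_eq)
  show "v \<in> V" "snd g = \<beta> v" "g \<in> grp Gx" using 1 by auto
  show "g = zcls E xa xr (zrep g) (\<beta> v)" using grp_zquot_elim(1)[OF 2] 1(3) by simp
qed

lemma iso_edges: "bij_betw \<phi>1 (edges OS) (edges KG)"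
  unfolding bij_betw_def
proof
  show "inj_on \<phi>1 (edges OS)"
    unfolding inj_on_def using pi_idx_inj by (auto simp: OS_simps)
  show "\<phi>1 ` edges OS = edges KG"
  proof
    show "\<phi>1 ` edges OS \<subseteq> edges KG" using phi_edge by (auto simp: OS_simps)
    show "edges KG \<subseteq> \<phi>1 ` edges OS"
    proof
      fix x assume x: "x \<in> edges KG"
      obtain i j m where ijm: "x = (i, j, m)" by (cases x) auto
      then obtain e where e: "e \<in> edges E" "\<beta> i = rng E e" "\<pi> e = j" "idx e = m"
        using decode x by blast
      have "i \<in> V" using x ijm by (simp add: KG_simps)
      then have "(i, e) \<in> edges OS" using e by (simp add: OS_simps)
      then show "x \<in> \<phi>1 ` edges OS" using e ijm by force
    qed
  qed
qed

lemma iso_grp: "bij_betw \<psi> (grp OS) (grp K)"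
  unfolding bij_betw_def
proof
  show "inj_on \<psi> (grp OS)"
  proof (rule inj_onI)
    fix p q assume p: "p \<in> grp OS" and q: "q \<in> grp OS" and eq: "\<psi> p = \<psi> q"
    obtain g v where gv: "p = (g, v)" by (cases p) auto
    obtain h w where hw: "q = (h, w)" by (cases q) auto
    note g = grpOS_elim[OF p[unfolded gv]] and h = grpOS_elim[OF q[unfolded hw]]
    have e2: "zcls KG ka kr (zrep g) v = zcls KG ka kr (zrep h) w" using eq gv hw by simp
    have vw: "v = w" using arg_cong[OF e2, of snd] by simp
    then have "zcls KG ka kr (zrep g) v = zcls KG ka kr (zrep h) v" using e2 by simp
    then have e3: "zcls E xa xr (zrep g) (\<beta> v) = zcls E xa xr (zrep h) (\<beta> v)"
      by (rule cls_corr[OF g(1), THEN iffD2])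
    have "g = zcls E xa xr (zrep g) (\<beta> v)" by (rule g(3))
    also have "\<dots> = zcls E xa xr (zrep h) (\<beta> v)" by (rule e3)
    also have "\<dots> = h" unfolding vw by (rule sym[OF h(3)])
    finally show "p = q" using gv hw vw by simp
  qed
  show "\<psi> ` grp OS = grp K"
  proof
    show "\<psi> ` grp OS \<subseteq> grp K"
    proof
      fix k assume "k \<in> \<psi> ` grp OS"
      then obtain p where p: "p \<in> grp OS" "k = \<psi> p" by blast
      obtain g v where gv: "p = (g, v)" by (cases p) auto
      have "v \<in> V" using grpOS_elim(1) p gv by blast
      then show "k \<in> grp K" using p gv by (auto simp: K_simps)
    qed
    show "grp K \<subseteq> \<psi> ` grp OS"
    proof
      fix k assume "k \<in> grp K"
      then obtain m v where k: "k = zcls KG ka kr m v" "v \<in> V" by (auto simp: K_simps)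
      have mem: "(zcls E xa xr m (\<beta> v), v) \<in> grp OS"
        using k beta_verts by (auto simp: OS_simps Gx_simps)
      have eqk: "\<psi> (zcls E xa xr m (\<beta> v), v) = k" using zcls_zrep_K k by simp
      show "k \<in> \<psi> ` grp OS" using eqk mem by blast
    qed
  qed
qed

lemma iso_mul:
  assumes "p \<in> grp OS" "q \<in> grp OS" "dom OS p = cod OS q"
  shows "\<psi> (mul OS p q) = mul K (\<psi> p) (\<psi> q)"
proof -
  obtain g v where gv: "p = (g, v)" by (cases p) auto
  obtain h w where hw: "q = (h, w)" by (cases q) auto
  have vw: "v = w" using assms(3) gv hw by (simp add: OS_simps)
  note g = grpOS_elim[OF assms(1)[unfolded gv]] and h = grpOS_elim[OF assms(2)[unfolded hw vw[symmetric]]]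
  define a where "a = zrep g"
  define b where "b = zrep h"
  define a' where "a' = zrep (zcls KG ka kr a v)"
  define b' where "b' = zrep (zcls KG ka kr b v)"
  have "zcls KG ka kr a' v = zcls KG ka kr a v" unfolding a'_def by (rule zrep_zcls)
  then have ea: "zcls E xa xr a' (\<beta> v) = zcls E xa xr a (\<beta> v)" by (simp only: cls_corr[OF g(1)])
  have "zcls KG ka kr b' v = zcls KG ka kr b v" unfolding b'_def by (rule zrep_zcls)
  then have eb: "zcls E xa xr b' (\<beta> v) = zcls E xa xr b (\<beta> v)" by (simp only: cls_corr[OF g(1)])
  have "zcls E xa xr (a' + b') (\<beta> v) = zcls E xa xr (a + b) (\<beta> v)" by (rule E_add_cong[OF ea eb])
  then have K1: "zcls KG ka kr (a' + b') v = zcls KG ka kr (a + b) v" by (simp only: cls_corr[OF g(1)])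
  have "\<psi> (mul OS p q) = zcls KG ka kr (zrep (zcls E xa xr (a + b) (\<beta> v))) v"
    using gv hw g(2) by (simp add: OS_simps Gx_simps a_def b_def)
  also have "\<dots> = zcls KG ka kr (a + b) v" using zcls_zrep_K g(1) by blast
  also have "\<dots> = mul K (\<psi> p) (\<psi> q)"
    using K1 gv hw vw by (simp add: K_simps a_def b_def a'_def b'_def)
  finally show ?thesis .
qed

lemma iso_act:
  assumes "p \<in> grp OS" "x \<in> edges OS" "dom OS p = rng OS x"
  shows "act K (\<psi> p) (\<phi>1 x) = \<phi>1 (act OS p x) \<and> \<psi> (res OS p x) = res K (\<psi> p) (\<phi>1 x)"
proof -
  obtain g v where gv: "p = (g, v)" by (cases p) auto
  obtain w e where we: "x = (w, e)" by (cases x) auto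
  have vw: "v = w" using assms(3) gv we by (simp add: OS_simps)
  note g = grpOS_elim[OF assms(1)[unfolded gv]]
  have e: "e \<in> edges E" "\<beta> v = rng E e" using assms(2) we vw by (auto simp: OS_simps)
  define a where "a = zrep g"
  have xe: "(v, \<pi> e, idx e) \<in> edges KG" by (rule phi_edge[OF g(1) e])
  have r: "rng KG (v, \<pi> e, idx e) = v" by (simp add: KG_simps)
  have "act K (\<psi> p) (\<phi>1 x) = ka (zrep (zcls KG ka kr a v)) (v, \<pi> e, idx e)"
    using gv we vw by (simp add: K_simps a_def)
  also have "\<dots> = ka a (v, \<pi> e, idx e)" by (rule zact_single[OF xe r])
  also have "\<dots> = (v, \<pi> (xa a e), idx (xa a e))" by (rule local_act(1)[OF g(1) e])
  also have "\<dots> = \<phi>1 (act OS p x)" using gv we vw by (simp add: OS_simps Gx_simps a_def)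
  finally have 1: "act K (\<psi> p) (\<phi>1 x) = \<phi>1 (act OS p x)" .
  have pe: "\<pi> e \<in> V" using e pi_in_V by simp
  have "\<psi> (res OS p x) = zcls KG ka kr (zrep (zcls E xa xr (xr a e) (\<beta> (\<pi> e)))) (\<pi> e)"
    using gv we vw by (simp add: OS_simps Gx_simps a_def beta_pi)
  also have "\<dots> = zcls KG ka kr (xr a e) (\<pi> e)" by (rule zcls_zrep_K[OF pe])
  also have "\<dots> = zcls KG ka kr (kr a (v, \<pi> e, idx e)) (src KG (v, \<pi> e, idx e))"
    using local_act(2)[OF g(1) e] by (simp add: KG_simps)
  also have "\<dots> = zcls KG ka kr (kr (zrep (zcls KG ka kr a v)) (v, \<pi> e, idx e)) (src KG (v, \<pi> e, idx e))"
    using zres_cls[OF xe r zrep_zcls[symmetric]] .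
  also have "\<dots> = res K (\<psi> p) (\<phi>1 x)" using gv we vw by (simp add: K_simps a_def)
  finally show ?thesis using 1 by simp
qed

lemma iso: "ssg_iso OS K (\<lambda>v. v) \<phi>1 \<psi>"
  unfolding ssg_iso_def
proof (intro conjI ballI impI)
  show "bij_betw (\<lambda>v. v) (verts OS) (verts K)" unfolding K_simps(1) unfolding OS_simps(1) by (simp add: bij_betw_def)
  show "bij_betw \<phi>1 (edges OS) (edges K)" using iso_edges by (simp add: K_simps)
  show "bij_betw \<psi> (grp OS) (grp K)" by (rule iso_grp)
next
  fix x assume "x \<in> edges OS"
  then show "rng K (\<phi>1 x) = rng OS x" "src K (\<phi>1 x) = src OS x"
    unfolding K_simps(3,4) KG_simps(3,4) by (auto simp: OS_simps)
next
  fix p assume "p \<in> grp OS"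
  then show "dom K (\<psi> p) = dom OS p" "cod K (\<psi> p) = cod OS p"
    unfolding K_simps(6,7) by (auto simp: OS_simps)
next
  fix p q assume "p \<in> grp OS" "q \<in> grp OS" "dom OS p = cod OS q"
  then show "\<psi> (mul OS p q) = mul K (\<psi> p) (\<psi> q)" by (rule iso_mul)
next
  fix p x assume "p \<in> grp OS" "x \<in> edges OS" "dom OS p = rng OS x"
  then show "act K (\<psi> p) (\<phi>1 x) = \<phi>1 (act OS p x)" "\<psi> (res OS p x) = res K (\<psi> p) (\<phi>1 x)"
    using iso_act by blast+
qed

end


lemma tail_0: "tail 0 x = [x 0]"
  by (simp add: tail_def)

lemma tail_Suc: "tail (Suc n) x = x (Suc n) # tail n x"
  by (simp add: tail_def)

lemma tail_Cons: "\<exists>r. tail n x = x n # r"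
  by (cases n) (auto simp: tail_0 tail_Suc)

lemma length_tail: "length (tail n x) = Suc n"
  by (simp add: tail_def)

lemma tail_shift: "tail (Suc n) x = tail n (lshift x) @ [x 0]"
  by (induction n) (auto simp: tail_0 tail_Suc lshift_def)

lemma tail_set: "set (tail n x) \<subseteq> range x"
  by (auto simp: tail_def)

lemma tail_path:
  assumes "\<forall>n. x n \<in> edges G" "\<forall>n. src G (x (Suc n)) = rng G (x n)"
  shows "is_path G (tail n x)"
proof (induction n)
  case 0 then show ?case using assms by (simp add: tail_0 is_path_Cons)
next
  case (Suc n)
  obtain r where "tail n x = x n # r" using tail_Cons by blast
  then show ?case using Suc assms by (simp add: tail_Suc is_path_Cons)
qed

lemma act_path_length: "length (act_path S g \<mu>) = length \<mu>"
  by (induction \<mu> arbitrary: g) auto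

lemma act_path_take: "take (length \<mu>) (act_path S g (\<mu> @ \<nu>)) = act_path S g \<mu>"
  by (induction \<mu> arbitrary: g) auto

lemma topspace_left_inf_top: "topspace (left_inf_top S) = left_inf S"
  unfolding left_inf_top_def left_inf_def by (auto simp: PiE_def extensional_def)

lemma open_coord: "openin (left_inf_top S) {x \<in> left_inf S. x n \<in> U}"
proof -
  have c: "continuous_map (left_inf_top S) (discrete_topology (edges S)) (\<lambda>x. x n)"
    unfolding left_inf_top_def
    by (rule continuous_map_from_subtopology[OF continuous_map_product_projection]) simp
  have "openin (left_inf_top S) {x \<in> topspace (left_inf_top S). x n \<in> U \<inter> edges S}"
    by (rule openin_continuous_map_preimage[OF c]) simp
  moreover have "{x \<in> topspace (left_inf_top S). x n \<in> U \<inter> edges S} = {x \<in> left_inf S. x n \<in> U}"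
    by (auto simp: topspace_left_inf_top left_inf_def)
  ultimately show ?thesis by simp
qed

lemma cont_left_inf:
  assumes into: "\<And>x. x \<in> left_inf S \<Longrightarrow> f x \<in> left_inf T"
    and op: "\<And>n t. openin (left_inf_top S) {x \<in> left_inf S. f x n = t}"
  shows "continuous_map (left_inf_top S) (left_inf_top T) f"
  unfolding left_inf_top_def[of T] continuous_map_in_subtopology
proof
  show "f \<in> topspace (left_inf_top S) \<rightarrow> left_inf T" using into by (auto simp: topspace_left_inf_top)
  show "continuous_map (left_inf_top S) (product_topology (\<lambda>_. discrete_topology (edges T)) UNIV) f"
    unfolding continuous_map_componentwise_UNIV
  proof
    fix k
    show "continuous_map (left_inf_top S) (discrete_topology (edges T)) (\<lambda>x. f x k)"
      unfolding continuous_map_def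
    proof (intro conjI allI impI)
      show "(\<lambda>x. f x k) \<in> topspace (left_inf_top S) \<rightarrow> topspace (discrete_topology (edges T))"
        using into by (auto simp: topspace_left_inf_top left_inf_def)
      fix U assume "openin (discrete_topology (edges T)) U"
      have "{x \<in> topspace (left_inf_top S). f x k \<in> U} = \<Union>((\<lambda>t. {x \<in> left_inf S. f x k = t}) ` U)"
        by (auto simp: topspace_left_inf_top)
      moreover have "openin (left_inf_top S) (\<Union>((\<lambda>t. {x \<in> left_inf S. f x k = t}) ` U))"
        using op by (intro openin_Union) auto
      ultimately show "openin (left_inf_top S) {x \<in> topspace (left_inf_top S). f x k \<in> U}" by simp
    qed
  qed
qed

lemma equiv_transfer:
  assumes eA: "equiv A S" and RB: "R \<subseteq> B \<times> B"
    and fA: "\<And>x. x \<in> A \<Longrightarrow> f x \<in> B" and gB: "\<And>y. y \<in> B \<Longrightarrow> g y \<in> A"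
    and fg: "\<And>y. y \<in> B \<Longrightarrow> f (g y) = y"
    and corr: "\<And>x x'. x \<in> A \<Longrightarrow> x' \<in> A \<Longrightarrow> (f x, f x') \<in> R \<longleftrightarrow> (x, x') \<in> S"
  shows "equiv B R"
proof -
  have c: "\<And>y y'. y \<in> B \<Longrightarrow> y' \<in> B \<Longrightarrow> (y, y') \<in> R \<longleftrightarrow> (g y, g y') \<in> S"
    using corr[OF gB gB] fg by metis
  have SA: "S \<subseteq> A \<times> A" using eA unfolding equiv_def refl_on_def by auto
  show ?thesis
    unfolding equiv_def refl_on_def sym_def trans_def
  proof (intro conjI allI impI ballI)
    show "R \<subseteq> B \<times> B" by (rule RB)
  next
    fix y assume "y \<in> B" then show "(y, y) \<in> R"
      using c gB eA unfolding equiv_def refl_on_def by blast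
  next
    fix y y' assume "(y, y') \<in> R"
    then show "(y', y) \<in> R" using c RB eA unfolding equiv_def sym_def by blast
  next
    fix y y' y'' assume "(y, y') \<in> R" "(y', y'') \<in> R"
    then show "(y, y'') \<in> R" using c RB eA unfolding equiv_def trans_def by blast
  qed
qed


context ep
begin

definition Psi :: "(nat \<Rightarrow> 'e) \<Rightarrow> nat \<Rightarrow> 'e set \<times> 'e set \<times> nat" where
  "Psi x = (\<lambda>n. (\<pi> (x (Suc n)), \<pi> (x n), idx (x n)))"

definition dec :: "'e set \<times> 'e set \<times> nat \<Rightarrow> 'e" where
  "dec z = (case z of (i, j, m) \<Rightarrow> SOME e. e \<in> edges E \<and> \<beta> i = rng E e \<and> \<pi> e = j \<and> idx e = m)"

definition Psi' :: "(nat \<Rightarrow> 'e set \<times> 'e set \<times> nat) \<Rightarrow> nat \<Rightarrow> 'e" where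
  "Psi' y = (\<lambda>n. dec (y n))"

lemma dec_prop:
  assumes "(i, j, m) \<in> edges KG"
  shows "dec (i, j, m) \<in> edges E \<and> \<beta> i = rng E (dec (i, j, m)) \<and> \<pi> (dec (i, j, m)) = j \<and> idx (dec (i, j, m)) = m"
proof -
  have "\<exists>e. e \<in> edges E \<and> \<beta> i = rng E e \<and> \<pi> e = j \<and> idx e = m" using decode[OF assms] by blast
  then have "(SOME e. e \<in> edges E \<and> \<beta> i = rng E e \<and> \<pi> e = j \<and> idx e = m) \<in> edges E \<and>
    \<beta> i = rng E (SOME e. e \<in> edges E \<and> \<beta> i = rng E e \<and> \<pi> e = j \<and> idx e = m) \<and>
    \<pi> (SOME e. e \<in> edges E \<and> \<beta> i = rng E e \<and> \<pi> e = j \<and> idx e = m) = j \<and>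
    idx (SOME e. e \<in> edges E \<and> \<beta> i = rng E e \<and> \<pi> e = j \<and> idx e = m) = m"
    by (rule someI_ex)
  then show ?thesis by (simp add: dec_def)
qed

lemma left_inf_Gx: "left_inf Gx = left_inf E"
  by (simp add: left_inf_def Gx_eq zquot_simps)

lemma left_inf_K: "left_inf K = left_inf KG"
  by (simp add: left_inf_def K_eq zquot_simps)

lemma Psi_into: "x \<in> left_inf E \<Longrightarrow> Psi x \<in> left_inf KG"
  unfolding left_inf_def Psi_def
proof (intro CollectI conjI allI)
  fix n assume x: "x \<in> {x. (\<forall>n. x n \<in> edges E) \<and> (\<forall>n. src E (x (Suc n)) = rng E (x n))}"
  then show "(\<pi> (x (Suc n)), \<pi> (x n), idx (x n)) \<in> edges KG"
    using phi_edge[of "\<pi> (x (Suc n))" "x n"] pi_in_V beta_pi by auto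
  show "src KG (\<pi> (x (Suc (Suc n))), \<pi> (x (Suc n)), idx (x (Suc n))) = rng KG (\<pi> (x (Suc n)), \<pi> (x n), idx (x n))"
    by (simp add: KG_simps)
qed

lemma Psi'_into: "y \<in> left_inf KG \<Longrightarrow> Psi' y \<in> left_inf E"
  unfolding left_inf_def Psi'_def
proof (intro CollectI conjI allI)
  fix n assume y: "y \<in> {x. (\<forall>n. x n \<in> edges KG) \<and> (\<forall>n. src KG (x (Suc n)) = rng KG (x n))}"
  obtain i j m where yn: "y n = (i, j, m)" by (cases "y n") auto
  obtain i' j' m' where ysn: "y (Suc n) = (i', j', m')" by (cases "y (Suc n)") auto
  have "y n \<in> edges KG" "y (Suc n) \<in> edges KG" using y by auto
  then have e1: "(i, j, m) \<in> edges KG" "(i', j', m') \<in> edges KG" using yn ysn by simp_all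
  have "src KG (y (Suc n)) = rng KG (y n)" using y by auto
  then have ji: "j' = i" using yn ysn by (simp add: KG_simps)
  show "dec (y n) \<in> edges E" using dec_prop[OF e1(1)] yn by simp
  have "src E (dec (y (Suc n))) = \<beta> (\<pi> (dec (y (Suc n))))" by (simp add: beta_pi)
  also have "\<dots> = \<beta> i" using dec_prop[OF e1(2)] ysn ji by simp
  also have "\<dots> = rng E (dec (y n))" using dec_prop[OF e1(1)] yn by simp
  finally show "src E (dec (y (Suc n))) = rng E (dec (y n))" .
qed

lemma Psi'_Psi: "x \<in> left_inf E \<Longrightarrow> Psi' (Psi x) = x"
proof
  fix n assume x: "x \<in> left_inf E"
  have "Psi x \<in> left_inf KG" using Psi_into x .
  then have "Psi x n \<in> edges KG" unfolding left_inf_def by auto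
  then have d: "dec (Psi x n) \<in> edges E" "\<pi> (dec (Psi x n)) = \<pi> (x n)" "idx (dec (Psi x n)) = idx (x n)"
    using dec_prop unfolding Psi_def by auto
  have "x n \<in> edges E" using x unfolding left_inf_def by auto
  then show "Psi' (Psi x) n = x n" using pi_idx_inj d unfolding Psi'_def by blast
qed

lemma Psi_Psi': "y \<in> left_inf KG \<Longrightarrow> Psi (Psi' y) = y"
proof
  fix n assume y: "y \<in> left_inf KG"
  obtain i j m where yn: "y n = (i, j, m)" by (cases "y n") auto
  obtain i' j' m' where ysn: "y (Suc n) = (i', j', m')" by (cases "y (Suc n)") auto
  have "y n \<in> edges KG" "y (Suc n) \<in> edges KG" using y unfolding left_inf_def by auto
  then have e1: "(i, j, m) \<in> edges KG" "(i', j', m') \<in> edges KG" using yn ysn by simp_all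
  have "src KG (y (Suc n)) = rng KG (y n)" using y unfolding left_inf_def by auto
  then have ji: "j' = i" using yn ysn by (simp add: KG_simps)
  show "Psi (Psi' y) n = y n"
    unfolding Psi_def Psi'_def using dec_prop[OF e1(1)] dec_prop[OF e1(2)] yn ysn ji by simp
qed

lemma Psi_homeo: "homeomorphic_maps (left_inf_top Gx) (left_inf_top K) Psi Psi'"
  unfolding homeomorphic_maps_def topspace_left_inf_top left_inf_Gx left_inf_K
proof (intro conjI ballI)
  show "continuous_map (left_inf_top Gx) (left_inf_top K) Psi"
  proof (rule cont_left_inf)
    show "\<And>x. x \<in> left_inf Gx \<Longrightarrow> Psi x \<in> left_inf K" using Psi_into by (simp add: left_inf_Gx left_inf_K)
    fix n t
    have "{x \<in> left_inf Gx. Psi x n = t} =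
          {x \<in> left_inf Gx. x (Suc n) \<in> {e. \<pi> e = fst t}} \<inter> {x \<in> left_inf Gx. x n \<in> {e. (\<pi> e, idx e) = snd t}}"
      unfolding Psi_def by (cases t) auto
    moreover have "openin (left_inf_top Gx) ({x \<in> left_inf Gx. x (Suc n) \<in> {e. \<pi> e = fst t}} \<inter> {x \<in> left_inf Gx. x n \<in> {e. (\<pi> e, idx e) = snd t}})"
      by (intro openin_Int open_coord)
    ultimately show "openin (left_inf_top Gx) {x \<in> left_inf Gx. Psi x n = t}" by simp
  qed
  show "continuous_map (left_inf_top K) (left_inf_top Gx) Psi'"
  proof (rule cont_left_inf)
    show "\<And>y. y \<in> left_inf K \<Longrightarrow> Psi' y \<in> left_inf Gx" using Psi'_into by (simp add: left_inf_Gx left_inf_K)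
    fix n t
    have eq: "{y \<in> left_inf K. Psi' y n = t} = {y \<in> left_inf K. y n \<in> {z. dec z = t}}"
      unfolding Psi'_def by auto
    show "openin (left_inf_top K) {y \<in> left_inf K. Psi' y n = t}" unfolding eq by (rule open_coord)
  qed
qed (simp_all add: Psi'_Psi Psi_Psi')

lemma Psi_tail:
  assumes "x \<in> left_inf E"
  shows "tail n (Psi x) = \<Phi> (\<pi> (x (Suc n))) (tail n x)"
proof (induction n)
  case 0 then show ?case by (simp add: tail_0 Psi_def)
next
  case (Suc n) then show ?case by (simp add: tail_Suc Psi_def)
qed

lemma li_E: "x \<in> left_inf E \<Longrightarrow> (\<forall>n. x n \<in> edges E) \<and> (\<forall>n. src E (x (Suc n)) = rng E (x n))"
  by (simp add: left_inf_def)

lemma tail_hd_rng: "rng E (hd (tail n x)) = rng E (x n)"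
  using tail_Cons[of n x] by auto

lemma act_path_Gx:
  assumes "g \<in> grp Gx" "is_path E \<mu>" "\<mu> \<noteq> [] \<longrightarrow> rng E (hd \<mu>) = snd g"
  shows "act_path Gx g \<mu> = zpath xa xr (zrep g) \<mu>"
  using act_path_zquot'[of g E xa xr \<mu>] assms by (simp add: Gx_eq)

lemma act_path_Gx_cls:
  assumes "is_path E \<mu>" "\<mu> \<noteq> [] \<longrightarrow> rng E (hd \<mu>) = v"
  shows "act_path Gx (zcls E xa xr m v) \<mu> = zpath xa xr m \<mu>"
  using act_path_zquot[of E \<mu> v xa xr m] assms by (simp add: Gx_eq)

lemma act_path_K:
  assumes "g \<in> grp K" "is_path KG \<mu>" "\<mu> \<noteq> [] \<longrightarrow> rng KG (hd \<mu>) = snd g"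
  shows "act_path K g \<mu> = zpath ka kr (zrep g) \<mu>"
  using act_path_zquot'[of g KG ka kr \<mu>] assms by (simp add: K_eq)

lemma act_path_K_cls:
  assumes "is_path KG \<mu>" "\<mu> \<noteq> [] \<longrightarrow> rng KG (hd \<mu>) = v"
  shows "act_path K (zcls KG ka kr m v) \<mu> = zpath ka kr m \<mu>"
  using act_path_zquot[of KG \<mu> v ka kr m] assms by (simp add: K_eq)

lemma zpath_hd: "zpath xa xr k (tail n x) = tail n y \<Longrightarrow> xa k (x n) = y n"
  using tail_Cons[of n x] tail_Cons[of n y] by auto

lemma ae_Gx_iff:
  "(x, y) \<in> ae_equiv Gx \<longleftrightarrow> x \<in> left_inf E \<and> y \<in> left_inf E \<and>
     (\<exists>F k. finite F \<and> F \<subseteq> grp Gx \<and> (\<forall>n. zcls E xa xr (k n) (rng E (x n)) \<in> F \<and>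
        zpath xa xr (k n) (tail n x) = tail n y))"
proof
  assume "(x, y) \<in> ae_equiv Gx"
  then obtain F gs where xy: "x \<in> left_inf E" "y \<in> left_inf E" "finite F" "F \<subseteq> grp Gx"
    and gs: "\<And>n. gs n \<in> F \<and> snd (gs n) = rng E (x n) \<and> act_path Gx (gs n) (tail n x) = tail n y"
    unfolding ae_equiv_def left_inf_Gx by (auto simp: Gx_eq zquot_simps)
  have g: "\<And>n. gs n \<in> grp Gx" using gs xy(4) by blast
  have p: "\<And>n. is_path E (tail n x)" using tail_path li_E[OF xy(1)] by blast
  have "zcls E xa xr (zrep (gs n)) (rng E (x n)) = gs n" for n
  proof -
    have g': "gs n \<in> grp (zquot E xa xr)" using g[of n] by (simp only: Gx_eq)
    have h: "gs n = zcls E xa xr (zrep (gs n)) (snd (gs n))" by (rule grp_zquot_elim(1)[OF g'])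
    have "snd (gs n) = rng E (x n)" using gs by blast
    then have "gs n = zcls E xa xr (zrep (gs n)) (rng E (x n))" using h by (simp only:)
    then show ?thesis by (rule sym)
  qed
  moreover have "zpath xa xr (zrep (gs n)) (tail n x) = tail n y" for n
  proof -
    have "act_path Gx (gs n) (tail n x) = zpath xa xr (zrep (gs n)) (tail n x)"
      using act_path_Gx[OF g p] tail_hd_rng gs by simp
    then show ?thesis using gs by simp
  qed
  ultimately show "x \<in> left_inf E \<and> y \<in> left_inf E \<and>
     (\<exists>F k. finite F \<and> F \<subseteq> grp Gx \<and> (\<forall>n. zcls E xa xr (k n) (rng E (x n)) \<in> F \<and>
        zpath xa xr (k n) (tail n x) = tail n y))"
    using xy gs by (intro conjI exI[of _ F] exI[of _ "\<lambda>n. zrep (gs n)"]) auto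
next
  assume "x \<in> left_inf E \<and> y \<in> left_inf E \<and>
     (\<exists>F k. finite F \<and> F \<subseteq> grp Gx \<and> (\<forall>n. zcls E xa xr (k n) (rng E (x n)) \<in> F \<and>
        zpath xa xr (k n) (tail n x) = tail n y))"
  then obtain F k where xy: "x \<in> left_inf E" "y \<in> left_inf E" "finite F" "F \<subseteq> grp Gx"
    and k: "\<And>n. zcls E xa xr (k n) (rng E (x n)) \<in> F" "\<And>n. zpath xa xr (k n) (tail n x) = tail n y"
    by blast
  have "act_path Gx (zcls E xa xr (k n) (rng E (x n))) (tail n x) = tail n y" for n
  proof -
    have p: "is_path E (tail n x)" using tail_path li_E[OF xy(1)] by blast
    show ?thesis using act_path_Gx_cls[OF p, of "rng E (x n)" "k n"] k(2) tail_hd_rng by simp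
  qed
  then show "(x, y) \<in> ae_equiv Gx"
    unfolding ae_equiv_def left_inf_Gx using xy k(1)
    by (auto simp: Gx_eq zquot_simps intro!: exI[of _ F] exI[of _ "\<lambda>n. zcls E xa xr (k n) (rng E (x n))"])
qed

end


lemma left_inf_zquot: "left_inf (zquot G za zr) = left_inf G"
  by (simp add: left_inf_def zquot_simps)

lemma ae_zquot_iff:
  "(x, y) \<in> ae_equiv (zquot G za zr) \<longleftrightarrow> x \<in> left_inf G \<and> y \<in> left_inf G \<and>
     (\<exists>F k. finite F \<and> F \<subseteq> grp (zquot G za zr) \<and> (\<forall>n. zcls G za zr (k n) (rng G (x n)) \<in> F \<and>
        zpath za zr (k n) (tail n x) = tail n y))"
proof
  assume "(x, y) \<in> ae_equiv (zquot G za zr)"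
  then obtain F gs where xy: "x \<in> left_inf G" "y \<in> left_inf G" "finite F" "F \<subseteq> grp (zquot G za zr)"
    and gs: "\<And>n. gs n \<in> F \<and> snd (gs n) = rng G (x n) \<and> act_path (zquot G za zr) (gs n) (tail n x) = tail n y"
    unfolding ae_equiv_def left_inf_zquot by (auto simp: zquot_simps)
  have g: "\<And>n. gs n \<in> grp (zquot G za zr)" using gs xy(4) by blast
  have p: "\<And>n. is_path G (tail n x)" using tail_path xy(1) unfolding left_inf_def by blast
  have hdr: "\<And>n. rng G (hd (tail n x)) = rng G (x n)" using tail_Cons by (metis list.sel(1))
  have "zcls G za zr (zrep (gs n)) (rng G (x n)) = gs n" for n
  proof -
    have h: "gs n = zcls G za zr (zrep (gs n)) (snd (gs n))" by (rule grp_zquot_elim(1)[OF g])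
    have "snd (gs n) = rng G (x n)" using gs by blast
    then have "gs n = zcls G za zr (zrep (gs n)) (rng G (x n))" using h by (simp only:)
    then show ?thesis by (rule sym)
  qed
  moreover have "zpath za zr (zrep (gs n)) (tail n x) = tail n y" for n
  proof -
    have "act_path (zquot G za zr) (gs n) (tail n x) = zpath za zr (zrep (gs n)) (tail n x)"
      using act_path_zquot'[OF g p] hdr gs by simp
    then show ?thesis using gs by simp
  qed
  ultimately show "x \<in> left_inf G \<and> y \<in> left_inf G \<and>
     (\<exists>F k. finite F \<and> F \<subseteq> grp (zquot G za zr) \<and> (\<forall>n. zcls G za zr (k n) (rng G (x n)) \<in> F \<and>
        zpath za zr (k n) (tail n x) = tail n y))"
    using xy gs by (intro conjI exI[of _ F] exI[of _ "\<lambda>n. zrep (gs n)"]) auto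
next
  assume "x \<in> left_inf G \<and> y \<in> left_inf G \<and>
     (\<exists>F k. finite F \<and> F \<subseteq> grp (zquot G za zr) \<and> (\<forall>n. zcls G za zr (k n) (rng G (x n)) \<in> F \<and>
        zpath za zr (k n) (tail n x) = tail n y))"
  then obtain F k where xy: "x \<in> left_inf G" "y \<in> left_inf G" "finite F" "F \<subseteq> grp (zquot G za zr)"
    and k: "\<And>n. zcls G za zr (k n) (rng G (x n)) \<in> F" "\<And>n. zpath za zr (k n) (tail n x) = tail n y"
    by blast
  have p: "\<And>n. is_path G (tail n x)" using tail_path xy(1) unfolding left_inf_def by blast
  have hdr: "\<And>n. rng G (hd (tail n x)) = rng G (x n)" using tail_Cons by (metis list.sel(1))
  have "act_path (zquot G za zr) (zcls G za zr (k n) (rng G (x n))) (tail n x) = tail n y" for n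
    using act_path_zquot[OF p, where v="rng G (x n)" and za=za and zr=zr and m="k n"] k(2) hdr by simp
  then show "(x, y) \<in> ae_equiv (zquot G za zr)"
    unfolding ae_equiv_def left_inf_zquot using xy k(1)
    by (auto simp: zquot_simps intro!: exI[of _ F] exI[of _ "\<lambda>n. zcls G za zr (k n) (rng G (x n))"])
qed

context ep
begin

lemma ae_Gx: "ae_equiv Gx = ae_equiv (zquot E xa xr)"
  by (simp only: Gx_eq)
lemma ae_K: "ae_equiv K = ae_equiv (zquot KG ka kr)"
  by (simp only: K_eq)

lemma verts_fin: "finite (verts E)"
  using fE unfolding finite_graph_def by blast
lemma rng_verts: "e \<in> edges E \<Longrightarrow> rng E e \<in> verts E"
  using fE unfolding finite_graph_def by blast

lemma li_path: "x \<in> left_inf E \<Longrightarrow> is_path E (tail n x)"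
  using tail_path unfolding left_inf_def by blast

lemma li_hd: "rng E (hd (tail n x)) = rng E (x n)"
  using tail_Cons by (metis list.sel(1))

lemma li_edge: "x \<in> left_inf E \<Longrightarrow> x n \<in> edges E"
  unfolding left_inf_def by blast

lemma li_set: "x \<in> left_inf E \<Longrightarrow> set (tail n x) \<subseteq> edges E"
  unfolding tail_def using li_edge by auto

lemma rng_eq_of: "zpath xa xr k (tail n x) = tail n y \<Longrightarrow> rng E (y n) = rng E (x n)"
  using zpath_hd xa_rs by metis

lemma zrep_path_E:
  assumes "x \<in> left_inf E"
  shows "zpath xa xr (zrep (zcls E xa xr m (rng E (x n)))) (tail n x) = zpath xa xr m (tail n x)"
proof -
  obtain r where "tail n x = x n # r" using tail_Cons by blast
  then show ?thesis by (intro zrep_path[OF li_path[OF assms]]) auto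
qed

lemma ae_refl: "x \<in> left_inf E \<Longrightarrow> (x, x) \<in> ae_equiv Gx"
  unfolding ae_Gx ae_zquot_iff
proof (intro conjI exI[of _ "(\<lambda>v. zcls E xa xr 0 v) ` verts E"] exI[of _ "\<lambda>n. 0"] allI)
  assume x: "x \<in> left_inf E"
  show "finite ((\<lambda>v. zcls E xa xr 0 v) ` verts E)" using verts_fin by simp
  show "(\<lambda>v. zcls E xa xr 0 v) ` verts E \<subseteq> grp (zquot E xa xr)" by (auto simp: zquot_simps)
  fix n
  show "zcls E xa xr 0 (rng E (x n)) \<in> (\<lambda>v. zcls E xa xr 0 v) ` verts E"
    using rng_verts li_edge x by blast
  show "zpath xa xr 0 (tail n x) = tail n x" by (rule zpath_zero)
qed

lemma ae_sym:
  assumes "(x, y) \<in> ae_equiv Gx"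
  shows "(y, x) \<in> ae_equiv Gx"
proof -
  obtain F k where xy: "x \<in> left_inf E" "y \<in> left_inf E" "finite F" "F \<subseteq> grp (zquot E xa xr)"
    and k: "\<And>n. zcls E xa xr (k n) (rng E (x n)) \<in> F" "\<And>n. zpath xa xr (k n) (tail n x) = tail n y"
    using assms unfolding ae_Gx ae_zquot_iff by blast
  define a where "a n = zrep (zcls E xa xr (k n) (rng E (x n)))" for n
  define F' where "F' = (\<lambda>(g, v). zcls E xa xr (- zrep g) v) ` (F \<times> verts E)"
  have "zcls E xa xr (- a n) (rng E (y n)) \<in> F'" for n
  proof -
    have "rng E (y n) \<in> verts E" using rng_verts li_edge xy(2) by blast
    then show ?thesis unfolding F'_def a_def
      by (intro image_eqI[where x="(zcls E xa xr (k n) (rng E (x n)), rng E (y n))"]) (use k(1)[of n] in auto)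
  qed
  moreover have "zpath xa xr (- a n) (tail n y) = tail n x" for n
  proof -
    have "zpath xa xr (- a n) (tail n y) = zpath xa xr (- a n) (zpath xa xr (a n) (tail n x))"
      unfolding a_def zrep_path_E[OF xy(1)] k(2) ..
    also have "\<dots> = tail n x" by (simp add: zpath_add[symmetric] zpath_zero)
    finally show ?thesis .
  qed
  moreover have "finite F'" "F' \<subseteq> grp (zquot E xa xr)" using xy verts_fin unfolding F'_def by (auto simp: zquot_simps)
  ultimately show ?thesis unfolding ae_Gx ae_zquot_iff using xy
    by (intro conjI exI[of _ F'] exI[of _ "\<lambda>n. - a n"]) auto
qed

lemma ae_trans:
  assumes "(x, y) \<in> ae_equiv Gx" "(y, z) \<in> ae_equiv Gx"
  shows "(x, z) \<in> ae_equiv Gx"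
proof -
  obtain F1 k1 where xy: "x \<in> left_inf E" "y \<in> left_inf E" "finite F1" "F1 \<subseteq> grp (zquot E xa xr)"
    and k1: "\<And>n. zcls E xa xr (k1 n) (rng E (x n)) \<in> F1" "\<And>n. zpath xa xr (k1 n) (tail n x) = tail n y"
    using assms(1) unfolding ae_Gx ae_zquot_iff by blast
  obtain F2 k2 where yz: "z \<in> left_inf E" "finite F2" "F2 \<subseteq> grp (zquot E xa xr)"
    and k2: "\<And>n. zcls E xa xr (k2 n) (rng E (y n)) \<in> F2" "\<And>n. zpath xa xr (k2 n) (tail n y) = tail n z"
    using assms(2) unfolding ae_Gx ae_zquot_iff by blast
  define a where "a n = zrep (zcls E xa xr (k2 n) (rng E (y n)))" for n
  define b where "b n = zrep (zcls E xa xr (k1 n) (rng E (x n)))" for n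
  define F where "F = (\<lambda>((g, h), v). zcls E xa xr (zrep g + zrep h) v) ` ((F2 \<times> F1) \<times> verts E)"
  have "zcls E xa xr (a n + b n) (rng E (x n)) \<in> F" for n
  proof -
    have "rng E (x n) \<in> verts E" using rng_verts li_edge xy(1) by blast
    then show ?thesis unfolding F_def a_def b_def
      by (intro image_eqI[where x="((zcls E xa xr (k2 n) (rng E (y n)), zcls E xa xr (k1 n) (rng E (x n))), rng E (x n))"])
         (use k1(1)[of n] k2(1)[of n] in auto)
  qed
  moreover have "zpath xa xr (a n + b n) (tail n x) = tail n z" for n
  proof -
    have "zpath xa xr (a n + b n) (tail n x) = zpath xa xr (a n) (zpath xa xr (b n) (tail n x))"
      by (rule zpath_add)
    also have "\<dots> = zpath xa xr (a n) (tail n y)" unfolding b_def zrep_path_E[OF xy(1)] k1(2) ..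
    also have "\<dots> = tail n z" unfolding a_def zrep_path_E[OF xy(2)] k2(2) ..
    finally show ?thesis .
  qed
  moreover have "finite F" "F \<subseteq> grp (zquot E xa xr)" using xy yz verts_fin unfolding F_def by (auto simp: zquot_simps)
  ultimately show ?thesis unfolding ae_Gx ae_zquot_iff using xy yz
    by (intro conjI exI[of _ F] exI[of _ "\<lambda>n. a n + b n"]) auto
qed

lemma ae_equiv_Gx: "equiv (left_inf E) (ae_equiv Gx)"
  unfolding equiv_def refl_on_def sym_def trans_def
proof (intro conjI allI impI ballI)
  show "ae_equiv Gx \<subseteq> left_inf E \<times> left_inf E"
    unfolding ae_Gx by (auto simp: ae_zquot_iff)
qed (auto intro: ae_refl ae_sym ae_trans)

end


lemma zpath_take: "take (length \<mu>) (zpath za zr k (\<mu> @ \<nu>)) = zpath za zr k \<mu>"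
  by (induction \<mu> arbitrary: k) auto

lemma limit_shift_eq: "limit_shift S = (\<lambda>c. ae_equiv S `` {lshift (SOME x. x \<in> c)})"
  by (simp add: fun_eq_iff limit_shift_def)

context ep
begin

lemma Psi_rng: "rng KG (Psi x n) = \<pi> (x (Suc n))"
  by (simp add: Psi_def KG_simps)

lemma Psi_tail_zpath:
  assumes x: "x \<in> left_inf E"
  shows "zpath ka kr k (tail n (Psi x)) = \<Phi> (\<pi> (x (Suc n))) (zpath xa xr k (tail n x))"
proof -
  have wV: "\<pi> (x (Suc n)) \<in> V" using pi_in_V li_edge[OF x] by blast
  have h: "tail n x \<noteq> [] \<longrightarrow> rng E (hd (tail n x)) = \<beta> (\<pi> (x (Suc n)))"
    using li_hd beta_pi x unfolding left_inf_def by auto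
  show ?thesis unfolding Psi_tail[OF x] by (rule Phi_zpath[OF wV li_path[OF x] h])
qed

lemma pi_Suc_eq:
  assumes "\<And>n. zpath xa xr (k n) (tail n x) = tail n y"
  shows "\<pi> (x (Suc n)) = \<pi> (y (Suc n))"
  using zpath_hd[OF assms[of "Suc n"]] pi_xa by metis

lemma corr_fwd:
  assumes xy: "(x, y) \<in> ae_equiv Gx"
  shows "(Psi x, Psi y) \<in> ae_equiv K"
proof -
  obtain F k where xy: "x \<in> left_inf E" "y \<in> left_inf E" "finite F" "F \<subseteq> grp (zquot E xa xr)"
    and k: "\<And>n. zcls E xa xr (k n) (rng E (x n)) \<in> F" "\<And>n. zpath xa xr (k n) (tail n x) = tail n y"
    using assms unfolding ae_Gx ae_zquot_iff by blast
  define g where "g n = zcls E xa xr (k n) (rng E (x n))" for n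
  define F' where "F' = (\<lambda>(g, w). zcls KG ka kr (zrep g) w) ` (F \<times> V)"
  have "zcls KG ka kr (zrep (g n)) (rng KG (Psi x n)) \<in> F'" for n
  proof -
    have "\<pi> (x (Suc n)) \<in> V" using pi_in_V li_edge[OF xy(1)] by blast
    then show ?thesis unfolding F'_def Psi_rng
      by (intro image_eqI[where x="(g n, \<pi> (x (Suc n)))"]) (use k(1)[of n] in \<open>auto simp: g_def\<close>)
  qed
  moreover have "zpath ka kr (zrep (g n)) (tail n (Psi x)) = tail n (Psi y)" for n
  proof -
    have "zpath ka kr (zrep (g n)) (tail n (Psi x)) = \<Phi> (\<pi> (x (Suc n))) (zpath xa xr (zrep (g n)) (tail n x))"
      by (rule Psi_tail_zpath[OF xy(1)])
    also have "\<dots> = \<Phi> (\<pi> (x (Suc n))) (tail n y)" unfolding g_def zrep_path_E[OF xy(1)] k(2) ..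
    also have "\<dots> = tail n (Psi y)" using Psi_tail[OF xy(2)] pi_Suc_eq[OF k(2)] by simp
    finally show ?thesis .
  qed
  moreover have "finite F'" using xy V_finite unfolding F'_def by simp
  moreover have "F' \<subseteq> grp (zquot KG ka kr)" unfolding F'_def by (auto simp: zquot_simps KG_simps)
  moreover have "Psi x \<in> left_inf KG" "Psi y \<in> left_inf KG" using Psi_into xy by auto
  ultimately show ?thesis unfolding ae_K ae_zquot_iff
    by (intro conjI exI[of _ F'] exI[of _ "\<lambda>n. zrep (g n)"]) auto
qed

lemma corr_bwd:
  assumes xy0: "x \<in> left_inf E" "y \<in> left_inf E" and a: "(Psi x, Psi y) \<in> ae_equiv K"
  shows "(x, y) \<in> ae_equiv Gx"
proof -
  obtain F' k where F': "finite F'" "F' \<subseteq> grp (zquot KG ka kr)"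
    and k: "\<And>n. zcls KG ka kr (k n) (rng KG (Psi x n)) \<in> F'" "\<And>n. zpath ka kr (k n) (tail n (Psi x)) = tail n (Psi y)"
    using a unfolding ae_K ae_zquot_iff by blast
  define F where "F = (\<lambda>(g, v). zcls E xa xr (zrep g) v) ` (F' \<times> verts E)"
  have zp: "zpath xa xr (k n) (tail n x) = tail n y" for n
  proof -
    have "\<Phi> (\<pi> (x (Suc n))) (zpath xa xr (k n) (tail n x)) = \<Phi> (\<pi> (y (Suc n))) (tail n y)"
      using k(2)[of n] Psi_tail_zpath[OF xy0(1)] Psi_tail[OF xy0(2)] by simp
    moreover have "set (zpath xa xr (k n) (tail n x)) \<subseteq> edges E" "set (tail n y) \<subseteq> edges E"
      using zpath_edges li_set xy0 by blast+
    ultimately show ?thesis using Phi_inj by blast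
  qed
  have "zcls E xa xr (k n) (rng E (x n)) \<in> F" for n
  proof -
    define w where "w = \<pi> (x (Suc n))"
    have wV: "w \<in> V" unfolding w_def using pi_in_V li_edge[OF xy0(1)] by blast
    have bw: "\<beta> w = rng E (x n)" unfolding w_def beta_pi using xy0(1) unfolding left_inf_def by auto
    have "zcls KG ka kr (zrep (zcls KG ka kr (k n) w)) w = zcls KG ka kr (k n) w" by (rule zrep_zcls)
    then have "zcls E xa xr (zrep (zcls KG ka kr (k n) w)) (\<beta> w) = zcls E xa xr (k n) (\<beta> w)"
      by (rule cls_corr[OF wV, THEN iffD2])
    then have eq: "zcls E xa xr (k n) (rng E (x n)) = zcls E xa xr (zrep (zcls KG ka kr (k n) w)) (rng E (x n))"
      unfolding bw by simp
    have "rng E (x n) \<in> verts E" using rng_verts li_edge xy0(1) by blast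
    moreover have "zcls KG ka kr (k n) w \<in> F'" using k(1)[of n] unfolding w_def Psi_rng .
    ultimately show ?thesis unfolding eq F_def
      by (intro image_eqI[where x="(zcls KG ka kr (k n) w, rng E (x n))"]) auto
  qed
  moreover have "finite F" "F \<subseteq> grp (zquot E xa xr)" using F' verts_fin unfolding F_def by (auto simp: zquot_simps)
  ultimately show ?thesis unfolding ae_Gx ae_zquot_iff using xy0 zp
    by (intro conjI exI[of _ F] exI[of _ k]) auto
qed

lemma corr: "x \<in> left_inf E \<Longrightarrow> y \<in> left_inf E \<Longrightarrow> (Psi x, Psi y) \<in> ae_equiv K \<longleftrightarrow> (x, y) \<in> ae_equiv Gx"
  using corr_fwd corr_bwd by blast

lemma lshift_li: "x \<in> left_inf E \<Longrightarrow> lshift x \<in> left_inf E"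
  unfolding left_inf_def lshift_def by auto

lemma ae_lshift:
  assumes "(x, y) \<in> ae_equiv Gx"
  shows "(lshift x, lshift y) \<in> ae_equiv Gx"
proof -
  obtain F k where xy: "x \<in> left_inf E" "y \<in> left_inf E" "finite F" "F \<subseteq> grp (zquot E xa xr)"
    and k: "\<And>n. zcls E xa xr (k n) (rng E (x n)) \<in> F" "\<And>n. zpath xa xr (k n) (tail n x) = tail n y"
    using assms unfolding ae_Gx ae_zquot_iff by blast
  have "zpath xa xr (k (Suc n)) (tail n (lshift x)) = tail n (lshift y)" for n
  proof -
    have "zpath xa xr (k (Suc n)) (tail n (lshift x) @ [x 0]) = tail n (lshift y) @ [y 0]"
      using k(2)[of "Suc n"] by (simp add: tail_shift)
    then have "take (length (tail n (lshift x))) (zpath xa xr (k (Suc n)) (tail n (lshift x) @ [x 0]))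
        = take (length (tail n (lshift y))) (tail n (lshift y) @ [y 0])"
      by (simp add: length_tail)
    then show ?thesis by (simp only: zpath_take) simp
  qed
  moreover have "zcls E xa xr (k (Suc n)) (rng E (lshift x n)) \<in> F" for n
    using k(1)[of "Suc n"] by (simp add: lshift_def)
  ultimately show ?thesis unfolding ae_Gx ae_zquot_iff using xy lshift_li
    by (intro conjI exI[of _ F] exI[of _ "\<lambda>n. k (Suc n)"]) auto
qed

lemma Psi_lshift: "Psi (lshift x) = lshift (Psi x)"
  by (simp add: Psi_def lshift_def)

lemma ae_K_sub: "ae_equiv K \<subseteq> left_inf KG \<times> left_inf KG"
  unfolding ae_K by (auto simp: ae_zquot_iff)

lemma ae_equiv_K: "equiv (left_inf KG) (ae_equiv K)"
  by (rule equiv_transfer[OF ae_equiv_Gx ae_K_sub Psi_into Psi'_into Psi_Psi' corr])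

lemma conj: "top_conjugate (limit_space Gx) (limit_shift Gx) (limit_space K) (limit_shift K)"
  unfolding limit_space_def limit_shift_eq
proof (rule quot_conj[OF Psi_homeo])
  show "equiv (topspace (left_inf_top Gx)) (ae_equiv Gx)"
    unfolding topspace_left_inf_top left_inf_Gx by (rule ae_equiv_Gx)
  show "equiv (topspace (left_inf_top K)) (ae_equiv K)"
    unfolding topspace_left_inf_top left_inf_K by (rule ae_equiv_K)
  fix x x' assume "x \<in> topspace (left_inf_top Gx)" "x' \<in> topspace (left_inf_top Gx)"
  then show "(Psi x, Psi x') \<in> ae_equiv K \<longleftrightarrow> (x, x') \<in> ae_equiv Gx"
    unfolding topspace_left_inf_top left_inf_Gx by (rule corr)
next
  fix x assume "x \<in> topspace (left_inf_top Gx)"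
  then show "lshift x \<in> topspace (left_inf_top Gx)"
    unfolding topspace_left_inf_top left_inf_Gx by (rule lshift_li)
next
  fix x x' assume "(x, x') \<in> ae_equiv Gx"
  then show "(lshift x, lshift x') \<in> ae_equiv Gx" by (rule ae_lshift)
next
  fix x show "Psi (lshift x) = lshift (Psi x)" by (rule Psi_lshift)
qed

end



theorem corollary5p1:
  fixes E :: "('v,'e) dgraph" and H :: "('hv,'he) dgraph"
    and \<xi>v :: "'hv \<Rightarrow> 'v" and \<xi>0 \<xi>1 :: "'he \<Rightarrow> 'e"
  assumes "finite_graph E" and "finite_graph H"
    and "embedding_pair H E \<xi>v \<xi>0 \<xi>1"
  defines "V\<^sub>O\<^sub>S \<equiv> os_verts H E \<xi>0 \<xi>1"
    and "\<pi> \<equiv> os_pi H E \<xi>0 \<xi>1"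
    and "\<beta> \<equiv> os_beta E"
  defines "OS \<equiv> out_split (G_xi H E \<xi>0 \<xi>1) V\<^sub>O\<^sub>S \<pi> \<beta>"
  defines "A \<equiv> (\<lambda>v w. card {f \<in> edges OS. rng OS f = v \<and> src OS f = w})"
  defines "B \<equiv> (\<lambda>v w. max 0 (int (A v w) - 1))"
  shows "(\<forall>e\<in>edges E. \<beta> (\<pi> e) = src E e)
    \<and> ssg_isomorphic OS (KEP V\<^sub>O\<^sub>S A B)
    \<and> top_conjugate (limit_space (G_xi H E \<xi>0 \<xi>1)) (limit_shift (G_xi H E \<xi>0 \<xi>1))
                    (limit_space (KEP V\<^sub>O\<^sub>S A B)) (limit_shift (KEP V\<^sub>O\<^sub>S A B))"
proof -
  interpret X: ep E H \<xi>v \<xi>0 \<xi>1 using assms(1-3) by unfold_locales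
  show ?thesis
    unfolding B_def A_def OS_def V\<^sub>O\<^sub>S_def \<pi>_def \<beta>_def ssg_isomorphic_def
    using X.beta_pi X.iso X.conj by blast
qed

end
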